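(* Let $\vec{\mathcal G}=([n],E)$, $m=|E|$, be an ergodic graph of a deterministic two-player mean-payoff game. For every $(\sigma,\tau)\in\Xi$, $$\mathcal P^{\sigma,\tau}=\{r\in\mathbb R^m:\ \lambda^{\sigma,\tau}(r)+u^{\sigma,\tau}_i(r)-u^{\sigma,\tau}_j(r)>r_{ij}\ \forall (i,j)\in E \text{ with } i\in V_{\max}, j\ne\sigma(i);\ \lambda^{\sigma,\tau}(r)+u^{\sigma,\tau}_i(r)-u^{\sigma,\tau}_j(r)<r_{ij}\ \forall (i,j)\in E \text{ with } i\in V_{\min}, j\ne\tau(i)\}.$$ In particular the sets $\mathcal P^{\sigma,\tau}$ are open polyhedral cones. These cones are pairwise disjoint, and $\mathbb R^m\setminus\mathcal U$ is contained in a finite union of hyperplanes, hence has Lebesgue measure zero. Furthermore, if $r\in\mathcal U$, then the ergodic equation has a unique solution up to adding a constant to every coordinate of the bias, and each maximum and each minimum in the ergodic equation is attained by a single edge.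
   Context: Setting: directed graph $\vec{\mathcal G}=([n],E)$ without multiple edges (loops allowed), each vertex having an outgoing edge, $[n]=V_{\max}\uplus V_{\min}$, weights $r\in\mathbb R^E=\mathbb R^m$. Ergodic equation in $(\lambda,u)\in\mathbb R\times\mathbb R^n$: $\lambda+u_i=\max_{(i,j)\in E}\{r_{ij}+u_j\}$ ($i\in V_{\max}$), $\lambda+u_i=\min_{(i,j)\in E}\{r_{ij}+u_j\}$ ($i\in V_{\min}$); $u$ is a bias if $(\lambda,u)$ solves it. The graph is ergodic if the ergodic equation has a solution for every $r$. Policies $\sigma:V_{\max}\to[n]$, $\tau:V_{\min}\to[n]$ choose outgoing edges; $\sigma$ (resp. $\tau$) is induced by $u$ if $\sigma(i)$ attains the max (resp. $\tau(i)$ attains the min) in the ergodic equation at every $i\in V_{\max}$ (resp. $V_{\min}$). A pair $(\sigma,\tau)$ is a pair of bias-induced policies if both are induced by a common bias. $\vec{\mathcal G}^{\sigma,\tau}$ keeps at each vertex only the edge chosen by its owner's policy; $\Xi$ is the set of pairs for which $\vec{\mathcal G}^{\sigma,\tau}$ has exactly one directed cycle. For $(\sigma,\tau)\in\Xi$: $\lambda^{\sigma,\tau}(r)$ is the mean weight of the cycle of $\vec{\mathcal G}^{\sigma,\tau}$, and $u^{\sigma,\tau}(r)_l$ is the total weight, with respect to edge weights $r_{ij}-\lambda^{\sigma,\tau}(r)$, of the path in $\vec{\mathcal G}^{\sigma,\tau}$ from $l$ to the smallest-index vertex $k$ on its cycle. $\mathcal P^{\sigma,\tau}$ is the set of $r\in\mathbb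 R^m$ such that $(\sigma,\tau)$ is the only pair of bias-induced policies in the game with weights $r$, and $\mathcal U=\bigcup_{(\sigma,\tau)\in\Xi}\mathcal P^{\sigma,\tau}$. *)

theory Defs
  imports "HOL-Analysis.Analysis"
begin

(* Vertices are the naturals 0..n-1 (the set {..<n} plays the role of [n]).  Weight vectors r \<in> R^E are the extensional
  functions E \<rightarrow>\<^sub>E UNIV (the space of PiM E (\<lambda>_. lborel)). *)

definition Vmin :: "nat \<Rightarrow> nat set \<Rightarrow> nat set" where
  "Vmin n Vmax = {..<n} - Vmax"

definition weights :: "(nat \<times> nat) set \<Rightarrow> (nat \<times> nat \<Rightarrow> real) set" where
  "weights E = E \<rightarrow>\<^sub>E (UNIV :: real set)"

definition ergodic_sol ::
  "nat \<Rightarrow> (nat \<times> nat) set \<Rightarrow> nat set \<Rightarrow> (nat \<times> nat \<Rightarrow> real) \<Rightarrow> real \<Rightarrow> (nat \<Rightarrow> real) \<Rightarrow> bool" where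
  "ergodic_sol n E Vmax r lam u \<longleftrightarrow>
     (\<forall>i\<in>Vmax. lam + u i = Max {r (i, j) + u j | j. (i, j) \<in> E}) \<and>
     (\<forall>i\<in>Vmin n Vmax. lam + u i = Min {r (i, j) + u j | j. (i, j) \<in> E})"

definition ergodic_graph :: "nat \<Rightarrow> (nat \<times> nat) set \<Rightarrow> nat set \<Rightarrow> bool" where
  "ergodic_graph n E Vmax \<longleftrightarrow> (\<forall>r \<in> weights E. \<exists>lam u. ergodic_sol n E Vmax r lam u)"

definition max_policy :: "(nat \<times> nat) set \<Rightarrow> nat set \<Rightarrow> (nat \<Rightarrow> nat) \<Rightarrow> bool" where
  "max_policy E Vmax \<sigma> \<longleftrightarrow> \<sigma> \<in> Vmax \<rightarrow>\<^sub>E UNIV \<and> (\<forall>i\<in>Vmax. (i, \<sigma> i) \<in> E)"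

definition min_policy :: "nat \<Rightarrow> (nat \<times> nat) set \<Rightarrow> nat set \<Rightarrow> (nat \<Rightarrow> nat) \<Rightarrow> bool" where
  "min_policy n E Vmax \<tau> \<longleftrightarrow> \<tau> \<in> Vmin n Vmax \<rightarrow>\<^sub>E UNIV \<and> (\<forall>i\<in>Vmin n Vmax. (i, \<tau> i) \<in> E)"

definition bias_induced_pair ::
  "nat \<Rightarrow> (nat \<times> nat) set \<Rightarrow> nat set \<Rightarrow> (nat \<times> nat \<Rightarrow> real) \<Rightarrow> (nat \<Rightarrow> nat) \<Rightarrow> (nat \<Rightarrow> nat) \<Rightarrow> bool" where
  "bias_induced_pair n E Vmax r \<sigma> \<tau> \<longleftrightarrow>
     max_policy E Vmax \<sigma> \<and> min_policy n E Vmax \<tau> \<and>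
     (\<exists>lam u. ergodic_sol n E Vmax r lam u \<and>
        (\<forall>i\<in>Vmax. r (i, \<sigma> i) + u (\<sigma> i) = lam + u i) \<and>
        (\<forall>i\<in>Vmin n Vmax. r (i, \<tau> i) + u (\<tau> i) = lam + u i))"

definition succ_pol :: "nat set \<Rightarrow> (nat \<Rightarrow> nat) \<Rightarrow> (nat \<Rightarrow> nat) \<Rightarrow> nat \<Rightarrow> nat" where
  "succ_pol Vmax \<sigma> \<tau> i = (if i \<in> Vmax then \<sigma> i else \<tau> i)"

(* Directed cycles of a functional graph f on V (vertex sets of the cycles):
  orbits of periodic points. *)
definition fcycles :: "(nat \<Rightarrow> nat) \<Rightarrow> nat set \<Rightarrow> nat set set" where
  "fcycles f V = {C. \<exists>i\<in>V. \<exists>k>0. (f ^^ k) i = i \<and> C = {(f ^^ j) i | j. True}}"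

definition Xi :: "nat \<Rightarrow> (nat \<times> nat) set \<Rightarrow> nat set \<Rightarrow> ((nat \<Rightarrow> nat) \<times> (nat \<Rightarrow> nat)) set" where
  "Xi n E Vmax = {(\<sigma>, \<tau>). max_policy E Vmax \<sigma> \<and> min_policy n E Vmax \<tau> \<and>
                          card (fcycles (succ_pol Vmax \<sigma> \<tau>) {..<n}) = 1}"

definition the_cycle :: "nat \<Rightarrow> nat set \<Rightarrow> (nat \<Rightarrow> nat) \<Rightarrow> (nat \<Rightarrow> nat) \<Rightarrow> nat set" where
  "the_cycle n Vmax \<sigma> \<tau> = (THE C. C \<in> fcycles (succ_pol Vmax \<sigma> \<tau>) {..<n})"

definition lam_pol :: "nat \<Rightarrow> nat set \<Rightarrow> (nat \<Rightarrow> nat) \<Rightarrow> (nat \<Rightarrow> nat) \<Rightarrow> (nat \<times> nat \<Rightarrow> real) \<Rightarrow> real" where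
  "lam_pol n Vmax \<sigma> \<tau> r =
     (let C = the_cycle n Vmax \<sigma> \<tau>; f = succ_pol Vmax \<sigma> \<tau>
      in (\<Sum>i\<in>C. r (i, f i)) / real (card C))"

definition u_pol :: "nat \<Rightarrow> nat set \<Rightarrow> (nat \<Rightarrow> nat) \<Rightarrow> (nat \<Rightarrow> nat) \<Rightarrow> (nat \<times> nat \<Rightarrow> real) \<Rightarrow> nat \<Rightarrow> real" where
  "u_pol n Vmax \<sigma> \<tau> r l =
     (let f = succ_pol Vmax \<sigma> \<tau>; k = Min (the_cycle n Vmax \<sigma> \<tau>);
          t = (LEAST t. (f ^^ t) l = k); lam = lam_pol n Vmax \<sigma> \<tau> r
      in (\<Sum>s<t. r ((f ^^ s) l, (f ^^ Suc s) l) - lam))"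

definition Pcone :: "nat \<Rightarrow> (nat \<times> nat) set \<Rightarrow> nat set \<Rightarrow> (nat \<Rightarrow> nat) \<Rightarrow> (nat \<Rightarrow> nat) \<Rightarrow> (nat \<times> nat \<Rightarrow> real) set" where
  "Pcone n E Vmax \<sigma> \<tau> = {r \<in> weights E. bias_induced_pair n E Vmax r \<sigma> \<tau> \<and>
      (\<forall>\<sigma>' \<tau>'. bias_induced_pair n E Vmax r \<sigma>' \<tau>' \<longrightarrow> \<sigma>' = \<sigma> \<and> \<tau>' = \<tau>)}"

definition Ucones :: "nat \<Rightarrow> (nat \<times> nat) set \<Rightarrow> nat set \<Rightarrow> (nat \<times> nat \<Rightarrow> real) set" where
  "Ucones n E Vmax = (\<Union>(\<sigma>, \<tau>)\<in>Xi n E Vmax. Pcone n E Vmax \<sigma> \<tau>)"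

definition open_polyhedral_cone :: "(nat \<times> nat) set \<Rightarrow> (nat \<times> nat \<Rightarrow> real) set \<Rightarrow> bool" where
  "open_polyhedral_cone E P \<longleftrightarrow> (\<exists>A. finite A \<and>
      P = {r \<in> weights E. \<forall>a\<in>A. (\<Sum>e\<in>E. a e * r e) > 0})"

definition hyperplane :: "(nat \<times> nat) set \<Rightarrow> (nat \<times> nat \<Rightarrow> real) \<Rightarrow> real \<Rightarrow> (nat \<times> nat \<Rightarrow> real) set" where
  "hyperplane E a b = {r \<in> weights E. (\<Sum>e\<in>E. a e * r e) = b}"

end

theory Submission
  imports Defs
begin


lemma hyperplane_sets:
  assumes "finite E"
  shows "hyperplane E a b \<in> sets (PiM E (\<lambda>_. lborel))"
proof -
  have "hyperplane E a b = {r \<in> space (PiM E (\<lambda>_. lborel)). (\<Sum>e\<in>E. a e * r e) = b}"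
    by (simp add: hyperplane_def weights_def space_PiM)
  also have "\<dots> \<in> sets (PiM E (\<lambda>_. lborel))" using assms by measurable
  finally show ?thesis .
qed

lemma hyperplane_null:
  assumes fin: "finite E" and e0: "e0 \<in> E" and a0: "a e0 \<noteq> 0"
  shows "hyperplane E a b \<in> null_sets (PiM E (\<lambda>_. lborel))"
proof -
  interpret product_sigma_finite "\<lambda>_. lborel" by standard
  define I where "I = E - {e0}"
  have I: "finite I" "e0 \<notin> I" "insert e0 I = E" using fin e0 by (auto simp: I_def)
  let ?H = "hyperplane E a b"
  have meas: "?H \<in> sets (PiM E (\<lambda>_. lborel))" by (rule hyperplane_sets[OF fin])
  have inner0: "(\<integral>\<^sup>+ y. indicator ?H (x(e0 := y)) \<partial>lborel) = 0" for x
  proof -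
    define y0 where "y0 = (b - (\<Sum>e\<in>I. a e * x e)) / a e0"
    have "(\<integral>\<^sup>+ y. indicator ?H (x(e0 := y)) \<partial>lborel) \<le> (\<integral>\<^sup>+ y. indicator {y0} y \<partial>lborel)"
    proof (rule nn_integral_mono)
      fix y
      show "indicator ?H (x(e0 := y)) \<le> (indicator {y0} y :: ennreal)"
      proof (cases "x(e0 := y) \<in> ?H")
        case True
        then have "(\<Sum>e\<in>E. a e * (x(e0 := y)) e) = b" by (simp add: hyperplane_def)
        moreover have "(\<Sum>e\<in>E. a e * (x(e0 := y)) e) = a e0 * y + (\<Sum>e\<in>I. a e * x e)"
        proof -
          have "(\<Sum>e\<in>E. a e * (x(e0 := y)) e) = a e0 * y + (\<Sum>e\<in>I. a e * (x(e0 := y)) e)"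
            using I by (subst I(3)[symmetric], subst sum.insert) auto
          also have "(\<Sum>e\<in>I. a e * (x(e0 := y)) e) = (\<Sum>e\<in>I. a e * x e)"
            using I by (intro sum.cong) auto
          finally show ?thesis .
        qed
        ultimately have "a e0 * y = b - (\<Sum>e\<in>I. a e * x e)" by linarith
        then have "y = y0" using a0 unfolding y0_def by (simp add: eq_divide_eq mult.commute)
        then show ?thesis using True by simp
      qed simp
    qed
    also have "\<dots> = 0" by simp
    finally show ?thesis by simp
  qed
  have "emeasure (PiM E (\<lambda>_. lborel)) ?H = (\<integral>\<^sup>+ x. indicator ?H x \<partial>PiM E (\<lambda>_. lborel))"
    using meas by simp
  also have "\<dots> = (\<integral>\<^sup>+ x. (\<integral>\<^sup>+ y. indicator ?H (x(e0 := y)) \<partial>lborel) \<partial>PiM I (\<lambda>_. lborel))"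
    using product_nn_integral_insert[OF I(1,2), of "indicator ?H"] meas I(3) by simp
  also have "\<dots> = 0" by (simp add: inner0)
  finally show ?thesis using meas by (simp add: null_sets_def)
qed



locale game =
  fixes n :: nat and E :: "(nat \<times> nat) set" and Vmax :: "nat set"
  assumes E_sub: "E \<subseteq> {..<n} \<times> {..<n}"
    and Vmax_sub: "Vmax \<subseteq> {..<n}"
    and out: "\<forall>i<n. \<exists>j. (i, j) \<in> E"
begin

lemma finE: "finite E" using E_sub finite_subset by blast

lemma E_lt: "(i, j) \<in> E \<Longrightarrow> i < n \<and> j < n" using E_sub by auto

lemma Vmin_iff: "i \<in> Vmin n Vmax \<longleftrightarrow> i < n \<and> i \<notin> Vmax" by (auto simp: Vmin_def)

lemma Vmax_lt: "i \<in> Vmax \<Longrightarrow> i < n" using Vmax_sub by auto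

lemma vals_fin: "finite {r (i, j) + u j | j. (i, j) \<in> E}"
proof -
  have "{r (i, j) + u j | j. (i, j) \<in> E} = (\<lambda>j. r (i, j) + u j) ` {j. (i, j) \<in> E}" by auto
  moreover have "{j. (i, j) \<in> E} \<subseteq> {..<n}" using E_sub by auto
  ultimately show ?thesis by (metis finite_imageI finite_lessThan finite_subset)
qed

lemma vals_ne: "i < n \<Longrightarrow> {r (i, j) + u j | j. (i, j) \<in> E} \<noteq> {}" using out by auto

lemma sol_max_ge: "ergodic_sol n E Vmax r lam u \<Longrightarrow> i \<in> Vmax \<Longrightarrow> (i, j) \<in> E \<Longrightarrow> r (i, j) + u j \<le> lam + u i"
proof -
  assume s: "ergodic_sol n E Vmax r lam u" and i: "i \<in> Vmax" and e: "(i, j) \<in> E"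
  have "r (i, j) + u j \<le> Max {r (i, j) + u j | j. (i, j) \<in> E}"
    using e by (intro Max_ge vals_fin) auto
  then show ?thesis using s i unfolding ergodic_sol_def by auto
qed

lemma sol_max_att: "ergodic_sol n E Vmax r lam u \<Longrightarrow> i \<in> Vmax \<Longrightarrow> \<exists>j. (i, j) \<in> E \<and> lam + u i = r (i, j) + u j"
proof -
  assume s: "ergodic_sol n E Vmax r lam u" and i: "i \<in> Vmax"
  have "Max {r (i, j) + u j | j. (i, j) \<in> E} \<in> {r (i, j) + u j | j. (i, j) \<in> E}"
    using vals_fin out Vmax_lt[OF i] by (intro Max_in) auto
  then show ?thesis using s i unfolding ergodic_sol_def by auto
qed

lemma sol_min_le: "ergodic_sol n E Vmax r lam u \<Longrightarrow> i \<in> Vmin n Vmax \<Longrightarrow> (i, j) \<in> E \<Longrightarrow> lam + u i \<le> r (i, j) + u j"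
proof -
  assume s: "ergodic_sol n E Vmax r lam u" and i: "i \<in> Vmin n Vmax" and e: "(i, j) \<in> E"
  have "Min {r (i, j) + u j | j. (i, j) \<in> E} \<le> r (i, j) + u j"
    using e by (intro Min_le vals_fin) auto
  then show ?thesis using s i unfolding ergodic_sol_def by auto
qed

lemma sol_min_att: "ergodic_sol n E Vmax r lam u \<Longrightarrow> i \<in> Vmin n Vmax \<Longrightarrow> \<exists>j. (i, j) \<in> E \<and> lam + u i = r (i, j) + u j"
proof -
  assume s: "ergodic_sol n E Vmax r lam u" and i: "i \<in> Vmin n Vmax"
  have "Min {r (i, j) + u j | j. (i, j) \<in> E} \<in> {r (i, j) + u j | j. (i, j) \<in> E}"
    using vals_fin out i by (intro Min_in) (auto simp: Vmin_iff)
  then show ?thesis using s i unfolding ergodic_sol_def by auto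
qed

lemma sol_intro:
  assumes "\<And>i. i \<in> Vmax \<Longrightarrow> (\<exists>j. (i, j) \<in> E \<and> r (i, j) + u j = lam + u i) \<and> (\<forall>j. (i, j) \<in> E \<longrightarrow> r (i, j) + u j \<le> lam + u i)"
    and "\<And>i. i \<in> Vmin n Vmax \<Longrightarrow> (\<exists>j. (i, j) \<in> E \<and> r (i, j) + u j = lam + u i) \<and> (\<forall>j. (i, j) \<in> E \<longrightarrow> lam + u i \<le> r (i, j) + u j)"
  shows "ergodic_sol n E Vmax r lam u"
  unfolding ergodic_sol_def
proof (intro conjI ballI)
  fix i assume i: "i \<in> Vmax"
  show "lam + u i = Max {r (i, j) + u j | j. (i, j) \<in> E}"
    using assms(1)[OF i] by (intro Max_eqI[symmetric] vals_fin) (auto, metis)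
next
  fix i assume i: "i \<in> Vmin n Vmax"
  show "lam + u i = Min {r (i, j) + u j | j. (i, j) \<in> E}"
    using assms(2)[OF i] by (intro Min_eqI[symmetric] vals_fin) (auto, metis)
qed

end

locale pol = game +
  fixes \<sigma> \<tau> :: "nat \<Rightarrow> nat"
  assumes sig: "max_policy E Vmax \<sigma>" and tau: "min_policy n E Vmax \<tau>"
begin

abbreviation "f \<equiv> succ_pol Vmax \<sigma> \<tau>"

lemma f_edge: "i < n \<Longrightarrow> (i, f i) \<in> E"
  using sig tau by (auto simp: max_policy_def min_policy_def succ_pol_def Vmin_iff)

lemma f_lt: "i < n \<Longrightarrow> f i < n" using f_edge E_lt by blast

lemma fpow_lt: "i < n \<Longrightarrow> (f ^^ s) i < n"
  by (induction s) (auto simp: f_lt)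

lemma periodic_exists:
  assumes l: "l < n"
  shows "\<exists>a p. p > 0 \<and> (f ^^ p) ((f ^^ a) l) = (f ^^ a) l"
proof -
  have "\<not> inj_on (\<lambda>s. (f ^^ s) l) {..n}"
  proof
    assume inj: "inj_on (\<lambda>s. (f ^^ s) l) {..n}"
    have "(\<lambda>s. (f ^^ s) l) ` {..n} \<subseteq> {..<n}" using fpow_lt[OF l] by auto
    then have "card ((\<lambda>s. (f ^^ s) l) ` {..n}) \<le> n" by (metis card_lessThan card_mono finite_lessThan)
    moreover have "card ((\<lambda>s. (f ^^ s) l) ` {..n}) = Suc n" using card_image[OF inj] by simp
    ultimately show False by simp
  qed
  then obtain a b where ab: "a \<noteq> b" "(f ^^ a) l = (f ^^ b) l" unfolding inj_on_def by blast
  have "\<exists>a b. a < b \<and> (f ^^ a) l = (f ^^ b) l"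
  proof (cases "a < b")
    case True then show ?thesis using ab by blast
  next
    case False then have "b < a" using ab(1) by simp
    then show ?thesis using ab(2) by metis
  qed
  then obtain a b where "a < b" "(f ^^ a) l = (f ^^ b) l" by blast
  moreover have "(f ^^ b) l = (f ^^ (b - a)) ((f ^^ a) l)"
  proof -
    have "b = (b - a) + a" using \<open>a < b\<close> by simp
    then have "(f ^^ b) l = (f ^^ ((b - a) + a)) l" by simp
    then show ?thesis by (simp add: funpow_add)
  qed
  ultimately have "b - a > 0 \<and> (f ^^ (b - a)) ((f ^^ a) l) = (f ^^ a) l" by simp
  then show ?thesis by blast
qed

definition orb where "orb x = {(f ^^ j) x | j. True}"

lemma orb_fcycle: "x < n \<Longrightarrow> p > 0 \<Longrightarrow> (f ^^ p) x = x \<Longrightarrow> orb x \<in> fcycles f {..<n}"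
  unfolding fcycles_def orb_def by blast

lemma fcycleE:
  assumes "C \<in> fcycles f {..<n}"
  obtains x p where "x < n" "p > 0" "(f ^^ p) x = x" "C = orb x"
  using assms unfolding fcycles_def orb_def by auto

lemma orb_sub: "x < n \<Longrightarrow> orb x \<subseteq> {..<n}" using fpow_lt by (auto simp: orb_def)

lemma cyc_sub: "C \<in> fcycles f {..<n} \<Longrightarrow> C \<subseteq> {..<n}"
  by (metis fcycleE orb_sub)

lemma cyc_fin: "C \<in> fcycles f {..<n} \<Longrightarrow> finite C"
  using cyc_sub finite_subset by blast

lemma cyc_ne: "C \<in> fcycles f {..<n} \<Longrightarrow> C \<noteq> {}"
  by (erule fcycleE) (auto simp: orb_def)

lemma cyc_image: assumes "C \<in> fcycles f {..<n}" shows "f ` C = C"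
proof -
  obtain x p where x: "x < n" "p > 0" "(f ^^ p) x = x" "C = orb x" using assms by (rule fcycleE)
  have "f ` C \<subseteq> C"
  proof
    fix y assume "y \<in> f ` C"
    then obtain j where "y = f ((f ^^ j) x)" using x(4) by (auto simp: orb_def)
    then have "y = (f ^^ Suc j) x" by simp
    then show "y \<in> C" unfolding x(4) orb_def by blast
  qed
  moreover have "C \<subseteq> f ` C"
  proof
    fix y assume "y \<in> C"
    then obtain j where j: "y = (f ^^ j) x" using x(4) by (auto simp: orb_def)
    have "y = (f ^^ (j + p)) x" using x(3) j by (simp add: funpow_add)
    also have "\<dots> = (f ^^ Suc (j + p - 1)) x" using x(2) by simp
    also have "\<dots> = f ((f ^^ (j + p - 1)) x)" by simp
    finally show "y \<in> f ` C" unfolding x(4) orb_def by blast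
  qed
  ultimately show ?thesis by blast
qed

lemma cyc_inj: "C \<in> fcycles f {..<n} \<Longrightarrow> inj_on f C"
  by (rule finite_surj_inj) (auto simp: cyc_fin cyc_image)

definition potential :: "(nat \<times> nat \<Rightarrow> real) \<Rightarrow> real \<Rightarrow> (nat \<Rightarrow> real) \<Rightarrow> bool" where
  "potential r lam u \<longleftrightarrow> (\<forall>i<n. lam + u i = r (i, f i) + u (f i))"

lemma cyc_sum:
  assumes C: "C \<in> fcycles f {..<n}" and pot: "potential r lam u"
  shows "real (card C) * lam = (\<Sum>i\<in>C. r (i, f i))"
proof -
  have "(\<Sum>i\<in>C. lam + u i) = (\<Sum>i\<in>C. r (i, f i) + u (f i))"
    using pot cyc_sub[OF C] by (intro sum.cong) (auto simp: potential_def)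
  moreover have "(\<Sum>i\<in>C. u (f i)) = (\<Sum>i\<in>C. u i)"
    using sum.reindex[OF cyc_inj[OF C], of u] cyc_image[OF C] by simp
  ultimately show ?thesis by (simp add: sum.distrib)
qed

lemma path_sum:
  assumes pot: "potential r lam u" and l: "l < n"
  shows "u l = (\<Sum>s<t. r ((f ^^ s) l, (f ^^ Suc s) l) - lam) + u ((f ^^ t) l)"
proof (induction t)
  case 0 then show ?case by simp
next
  case (Suc t)
  have "lam + u ((f ^^ t) l) = r ((f ^^ t) l, f ((f ^^ t) l)) + u (f ((f ^^ t) l))"
    using pot fpow_lt[OF l] by (simp add: potential_def)
  moreover have "(\<Sum>s<Suc t. r ((f ^^ s) l, (f ^^ Suc s) l) - lam) = (\<Sum>s<t. r ((f ^^ s) l, (f ^^ Suc s) l) - lam) + (r ((f ^^ t) l, f ((f ^^ t) l)) - lam)"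
    by simp
  moreover have "u ((f ^^ Suc t) l) = u (f ((f ^^ t) l))" by simp
  ultimately show ?case using Suc by linarith
qed

lemma cycles_fin: "finite (fcycles f {..<n})"
proof -
  have "fcycles f {..<n} \<subseteq> Pow {..<n}" using cyc_sub by blast
  then show ?thesis using finite_subset by blast
qed

lemma cycles_ne: assumes "n \<ge> 1" shows "fcycles f {..<n} \<noteq> {}"
proof -
  obtain a p where "p > 0" "(f ^^ p) ((f ^^ a) 0) = (f ^^ a) 0"
    using periodic_exists[of 0] assms by auto
  then show ?thesis using orb_fcycle[of "(f ^^ a) 0" p] fpow_lt[of 0 a] assms by auto
qed

end


locale pairXi = pol +
  assumes xi: "card (fcycles f {..<n}) = 1"
begin

abbreviation "C \<equiv> the_cycle n Vmax \<sigma> \<tau>"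
abbreviation "k \<equiv> Min C"
abbreviation "lam0 \<equiv> lam_pol n Vmax \<sigma> \<tau>"
abbreviation "u0 \<equiv> u_pol n Vmax \<sigma> \<tau>"

lemma C_props: "C \<in> fcycles f {..<n} \<and> (\<forall>C'\<in>fcycles f {..<n}. C' = C)"
proof -
  obtain C0 where C0: "fcycles f {..<n} = {C0}" using xi by (rule card_1_singletonE)
  have "C = C0" unfolding the_cycle_def C0 by simp
  then show ?thesis using C0 by simp
qed

lemma C_in: "C \<in> fcycles f {..<n}" using C_props by blast
lemma C_uniq: "C' \<in> fcycles f {..<n} \<Longrightarrow> C' = C" using C_props by blast

lemma C_fin: "finite C" using cyc_fin[OF C_in] .
lemma C_ne: "C \<noteq> {}" using cyc_ne[OF C_in] .
lemma C_sub: "C \<subseteq> {..<n}" using cyc_sub[OF C_in] .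
lemma k_in: "k \<in> C" using C_fin C_ne by simp
lemma k_lt: "k < n" using k_in C_sub by auto
lemma card_C_pos: "card C > 0" using C_fin C_ne card_gt_0_iff by blast

lemma reach:
  assumes l: "l < n" and c: "c \<in> C"
  shows "\<exists>t. (f ^^ t) l = c"
proof -
  obtain a p where ap: "p > 0" "(f ^^ p) ((f ^^ a) l) = (f ^^ a) l" using periodic_exists[OF l] by blast
  have "orb ((f ^^ a) l) = C" using C_uniq orb_fcycle[OF fpow_lt[OF l] ap] by blast
  then obtain j where "c = (f ^^ j) ((f ^^ a) l)" using c by (auto simp: orb_def)
  then have "c = (f ^^ (j + a)) l" by (simp add: funpow_add)
  then show ?thesis by metis
qed

lemma closed_sub:
  assumes x: "x \<in> S" "x < n" and cl: "\<And>i. i \<in> S \<Longrightarrow> f i \<in> S"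
  shows "C \<subseteq> S"
proof
  fix c assume "c \<in> C"
  then obtain t where t: "(f ^^ t) x = c" using reach x by blast
  have "(f ^^ t) x \<in> S" for t by (induction t) (auto simp: x cl)
  then show "c \<in> S" using t by blast
qed

definition T where "T l = (LEAST t. (f ^^ t) l = k)"

lemma T_prop: "l < n \<Longrightarrow> (f ^^ T l) l = k"
  unfolding T_def by (rule LeastI_ex) (use reach k_in in blast)

lemma T_le: "(f ^^ t) l = k \<Longrightarrow> T l \<le> t"
  unfolding T_def by (rule Least_le)

lemma Tk: "T k = 0" using T_le[of 0 k] by simp

lemma T_step: assumes i: "i < n" "i \<noteq> k" shows "T i = Suc (T (f i))"
proof -
  have "T i \<noteq> 0" using T_prop[OF i(1)] i(2) by (metis funpow_0)
  then obtain t where t: "T i = Suc t" by (metis not0_implies_Suc)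
  have "(f ^^ t) (f i) = k" using T_prop[OF i(1)] t by (simp add: funpow_Suc_right del: funpow.simps)
  then have "T (f i) \<le> t" by (rule T_le)
  moreover have "(f ^^ Suc (T (f i))) i = k" using T_prop[OF f_lt[OF i(1)]]
    by (simp add: funpow_Suc_right del: funpow.simps)
  then have "T i \<le> Suc (T (f i))" by (rule T_le)
  ultimately show ?thesis using t by simp
qed

lemma lam_pol_eq: "lam0 r = (\<Sum>i\<in>C. r (i, f i)) / real (card C)"
  unfolding lam_pol_def Let_def ..

lemma u_pol_eq: "u0 r l = (\<Sum>s<T l. r ((f ^^ s) l, (f ^^ Suc s) l) - lam0 r)"
  unfolding u_pol_def Let_def T_def ..

lemma u0k: "u0 r k = 0" by (simp add: u_pol_eq Tk)

lemma pot_char: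
  assumes pot: "potential r lam u"
  shows "lam = lam0 r \<and> (\<forall>l<n. u l = u0 r l + u k)"
proof -
  have "real (card C) * lam = (\<Sum>i\<in>C. r (i, f i))" by (rule cyc_sum[OF C_in pot])
  then have lam: "lam = lam0 r" using card_C_pos by (simp add: lam_pol_eq field_simps)
  have "u l = u0 r l + u k" if l: "l < n" for l
    using path_sum[OF pot l, of "T l"] T_prop[OF l] lam by (simp add: u_pol_eq)
  then show ?thesis using lam by blast
qed

lemma u_pol_pot: "potential r (lam0 r) (u0 r)"
proof -
  let ?w = "u0 r" and ?l = "lam0 r"
  have A: "?l + ?w i = r (i, f i) + ?w (f i)" if i: "i < n" "i \<noteq> k" for i
  proof -
    have "?w i = (\<Sum>s<Suc (T (f i)). r ((f ^^ s) i, (f ^^ Suc s) i) - ?l)"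
      using T_step[OF i] by (simp add: u_pol_eq)
    also have "\<dots> = (r (i, f i) - ?l) + (\<Sum>s<T (f i). r ((f ^^ Suc s) i, (f ^^ Suc (Suc s)) i) - ?l)"
      by (subst sum.lessThan_Suc_shift) simp
    also have "(\<Sum>s<T (f i). r ((f ^^ Suc s) i, (f ^^ Suc (Suc s)) i) - ?l) = ?w (f i)"
      by (simp add: u_pol_eq funpow_Suc_right del: funpow.simps)
    finally show ?thesis by simp
  qed
  have sums: "(\<Sum>i\<in>C. ?l + ?w i) = (\<Sum>i\<in>C. r (i, f i) + ?w (f i))"
  proof -
    have "(\<Sum>i\<in>C. ?w (f i)) = (\<Sum>i\<in>C. ?w i)"
      using sum.reindex[OF cyc_inj[OF C_in], of ?w] cyc_image[OF C_in] by simp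
    moreover have "real (card C) * ?l = (\<Sum>i\<in>C. r (i, f i))"
      using card_C_pos by (simp add: lam_pol_eq)
    ultimately show ?thesis by (simp add: sum.distrib)
  qed
  have rest: "(\<Sum>i\<in>C - {k}. ?l + ?w i) = (\<Sum>i\<in>C - {k}. r (i, f i) + ?w (f i))"
    using A C_sub by (intro sum.cong) auto
  have "?l + ?w k = r (k, f k) + ?w (f k)"
    using sums rest sum.remove[OF C_fin k_in, of "\<lambda>i. ?l + ?w i"] sum.remove[OF C_fin k_in, of "\<lambda>i. r (i, f i) + ?w (f i)"]
    by linarith
  then show ?thesis using A unfolding potential_def by metis
qed

definition Sset where
  "Sset = {r \<in> weights E. \<forall>(i, j) \<in> E.
             (i \<in> Vmax \<and> j \<noteq> \<sigma> i \<longrightarrow>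
                lam_pol n Vmax \<sigma> \<tau> r + u_pol n Vmax \<sigma> \<tau> r i - u_pol n Vmax \<sigma> \<tau> r j > r (i, j)) \<and>
             (i \<in> Vmin n Vmax \<and> j \<noteq> \<tau> i \<longrightarrow>
                lam_pol n Vmax \<sigma> \<tau> r + u_pol n Vmax \<sigma> \<tau> r i - u_pol n Vmax \<sigma> \<tau> r j < r (i, j))}"

lemma f_max: "i \<in> Vmax \<Longrightarrow> f i = \<sigma> i" by (simp add: succ_pol_def)
lemma f_min: "i \<in> Vmin n Vmax \<Longrightarrow> f i = \<tau> i" by (simp add: succ_pol_def Vmin_iff)

lemma pot_eq: "i < n \<Longrightarrow> r (i, f i) + u0 r (f i) = lam0 r + u0 r i"
  using u_pol_pot unfolding potential_def by simp

lemma S_max: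
  assumes r: "r \<in> Sset" and e: "(i, j) \<in> E" and i: "i \<in> Vmax"
  shows "r (i, j) + u0 r j \<le> lam0 r + u0 r i \<and> (r (i, j) + u0 r j = lam0 r + u0 r i \<longleftrightarrow> j = \<sigma> i)"
proof (cases "j = \<sigma> i")
  case True then show ?thesis using pot_eq[of i r] f_max[OF i] Vmax_lt[OF i] by simp
next
  case False
  then have "lam0 r + u0 r i - u0 r j > r (i, j)" using r e i unfolding Sset_def by auto
  then show ?thesis using False by simp
qed

lemma S_min:
  assumes r: "r \<in> Sset" and e: "(i, j) \<in> E" and i: "i \<in> Vmin n Vmax"
  shows "lam0 r + u0 r i \<le> r (i, j) + u0 r j \<and> (r (i, j) + u0 r j = lam0 r + u0 r i \<longleftrightarrow> j = \<tau> i)"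
proof (cases "j = \<tau> i")
  case True then show ?thesis using pot_eq[of i r] f_min[OF i] i by (simp add: Vmin_iff)
next
  case False
  then have "lam0 r + u0 r i - u0 r j < r (i, j)" using r e i unfolding Sset_def by auto
  then show ?thesis using False by simp
qed

lemma sig_edge: "i \<in> Vmax \<Longrightarrow> (i, \<sigma> i) \<in> E" using sig by (simp add: max_policy_def)
lemma tau_edge: "i \<in> Vmin n Vmax \<Longrightarrow> (i, \<tau> i) \<in> E" using tau by (simp add: min_policy_def)

lemma S_sol: "r \<in> Sset \<Longrightarrow> ergodic_sol n E Vmax r (lam0 r) (u0 r)"
  apply (rule sol_intro)
  subgoal for i using S_max[of r i] sig_edge[of i] by blast
  subgoal for i using S_min[of r i] tau_edge[of i] by blast
  done

lemma S_bias: "r \<in> Sset \<Longrightarrow> bias_induced_pair n E Vmax r \<sigma> \<tau>"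
  unfolding bias_induced_pair_def using sig tau S_sol S_max sig_edge S_min tau_edge by metis


lemma Vcases: "i < n \<Longrightarrow> (i \<in> Vmax \<Longrightarrow> P) \<Longrightarrow> (i \<in> Vmin n Vmax \<Longrightarrow> P) \<Longrightarrow> P"
  by (auto simp: Vmin_iff)

lemma S_uniq:
  assumes r: "r \<in> Sset" and sol: "ergodic_sol n E Vmax r lam u"
  shows "lam = lam0 r \<and> (\<forall>i<n. u i = u0 r i + u k)"
proof -
  define d where "d i = u i - u0 r i" for i
  let ?D = "d ` {..<n}"
  have Dfin: "finite ?D" and Dne: "?D \<noteq> {}" using k_lt by auto
  define cmax where "cmax = Max ?D"
  define cmin where "cmin = Min ?D"
  have le_max: "d i \<le> cmax" if "i < n" for i using that Dfin by (auto simp: cmax_def)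
  have ge_min: "cmin \<le> d i" if "i < n" for i using that Dfin by (auto simp: cmin_def)
  obtain imax where imax: "imax < n" "d imax = cmax" using Max_in[OF Dfin Dne] by (auto simp: cmax_def)
  obtain imin where imin: "imin < n" "d imin = cmin" using Min_in[OF Dfin Dne] by (auto simp: cmin_def)
  have uu: "u i = u0 r i + d i" for i by (simp add: d_def)
  have A: "lam \<le> lam0 r"
  proof (rule Vcases[OF imax(1)])
    assume i: "imax \<in> Vmax"
    obtain j where j: "(imax, j) \<in> E" "lam + u imax = r (imax, j) + u j" using sol_max_att[OF sol i] by blast
    have "r (imax, j) + u0 r j \<le> lam0 r + u0 r imax" using S_max[OF r j(1) i] by blast
    moreover have "d j \<le> cmax" using le_max E_lt[OF j(1)] by blast
    ultimately show ?thesis using j(2) uu[of imax] uu[of j] imax(2) by linarith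
  next
    assume i: "imax \<in> Vmin n Vmax"
    have "lam + u imax \<le> r (imax, \<tau> imax) + u (\<tau> imax)" by (rule sol_min_le[OF sol i tau_edge[OF i]])
    moreover have "r (imax, \<tau> imax) + u0 r (\<tau> imax) = lam0 r + u0 r imax" using S_min[OF r tau_edge[OF i] i] by blast
    moreover have "d (\<tau> imax) \<le> cmax" using le_max E_lt[OF tau_edge[OF i]] by blast
    ultimately show ?thesis using uu[of imax] uu[of "\<tau> imax"] imax(2) by linarith
  qed
  have B: "lam0 r \<le> lam"
  proof (rule Vcases[OF imin(1)])
    assume i: "imin \<in> Vmax"
    have "r (imin, \<sigma> imin) + u (\<sigma> imin) \<le> lam + u imin" by (rule sol_max_ge[OF sol i sig_edge[OF i]])
    moreover have "r (imin, \<sigma> imin) + u0 r (\<sigma> imin) = lam0 r + u0 r imin" using S_max[OF r sig_edge[OF i] i] by blast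
    moreover have "cmin \<le> d (\<sigma> imin)" using ge_min E_lt[OF sig_edge[OF i]] by blast
    ultimately show ?thesis using uu[of imin] uu[of "\<sigma> imin"] imin(2) by linarith
  next
    assume i: "imin \<in> Vmin n Vmax"
    obtain j where j: "(imin, j) \<in> E" "lam + u imin = r (imin, j) + u j" using sol_min_att[OF sol i] by blast
    have "lam0 r + u0 r imin \<le> r (imin, j) + u0 r j" using S_min[OF r j(1) i] by blast
    moreover have "cmin \<le> d j" using ge_min E_lt[OF j(1)] by blast
    ultimately show ?thesis using j(2) uu[of imin] uu[of j] imin(2) by linarith
  qed
  have lam: "lam = lam0 r" using A B by simp
  have clM: "f i \<in> {i. i < n \<and> d i = cmax}" if "i \<in> {i. i < n \<and> d i = cmax}" for i
  proof -
    from that have i: "i < n" "d i = cmax" by auto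
    show ?thesis
    proof (rule Vcases[OF i(1)])
      assume iV: "i \<in> Vmax"
      obtain j where j: "(i, j) \<in> E" "lam + u i = r (i, j) + u j" using sol_max_att[OF sol iV] by blast
      have "r (i, j) + u0 r j \<le> lam0 r + u0 r i" and eqiff: "r (i, j) + u0 r j = lam0 r + u0 r i \<longleftrightarrow> j = \<sigma> i"
        using S_max[OF r j(1) iV] by blast+
      moreover have "d j \<le> cmax" using le_max E_lt[OF j(1)] by blast
      ultimately have "r (i, j) + u0 r j = lam0 r + u0 r i" "d j = cmax"
        using j(2) uu[of i] uu[of j] i(2) lam by linarith+
      then show ?thesis using eqiff f_max[OF iV] E_lt[OF j(1)] by auto
    next
      assume iV: "i \<in> Vmin n Vmax"
      have "lam + u i \<le> r (i, \<tau> i) + u (\<tau> i)" by (rule sol_min_le[OF sol iV tau_edge[OF iV]])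
      moreover have "r (i, \<tau> i) + u0 r (\<tau> i) = lam0 r + u0 r i" using S_min[OF r tau_edge[OF iV] iV] by blast
      moreover have "d (\<tau> i) \<le> cmax" using le_max E_lt[OF tau_edge[OF iV]] by blast
      ultimately have "d (\<tau> i) = cmax" using uu[of i] uu[of "\<tau> i"] i(2) lam by linarith
      then show ?thesis using f_min[OF iV] E_lt[OF tau_edge[OF iV]] by auto
    qed
  qed
  have clm: "f i \<in> {i. i < n \<and> d i = cmin}" if "i \<in> {i. i < n \<and> d i = cmin}" for i
  proof -
    from that have i: "i < n" "d i = cmin" by auto
    show ?thesis
    proof (rule Vcases[OF i(1)])
      assume iV: "i \<in> Vmax"
      have "r (i, \<sigma> i) + u (\<sigma> i) \<le> lam + u i" by (rule sol_max_ge[OF sol iV sig_edge[OF iV]])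
      moreover have "r (i, \<sigma> i) + u0 r (\<sigma> i) = lam0 r + u0 r i" using S_max[OF r sig_edge[OF iV] iV] by blast
      moreover have "cmin \<le> d (\<sigma> i)" using ge_min E_lt[OF sig_edge[OF iV]] by blast
      ultimately have "d (\<sigma> i) = cmin" using uu[of i] uu[of "\<sigma> i"] i(2) lam by linarith
      then show ?thesis using f_max[OF iV] E_lt[OF sig_edge[OF iV]] by auto
    next
      assume iV: "i \<in> Vmin n Vmax"
      obtain j where j: "(i, j) \<in> E" "lam + u i = r (i, j) + u j" using sol_min_att[OF sol iV] by blast
      have "lam0 r + u0 r i \<le> r (i, j) + u0 r j" and eqiff: "r (i, j) + u0 r j = lam0 r + u0 r i \<longleftrightarrow> j = \<tau> i"
        using S_min[OF r j(1) iV] by blast+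
      moreover have "cmin \<le> d j" using ge_min E_lt[OF j(1)] by blast
      ultimately have "r (i, j) + u0 r j = lam0 r + u0 r i" "d j = cmin"
        using j(2) uu[of i] uu[of j] i(2) lam by linarith+
      then show ?thesis using eqiff f_min[OF iV] E_lt[OF j(1)] by auto
    qed
  qed
  have "C \<subseteq> {i. i < n \<and> d i = cmax}" by (rule closed_sub[of imax]) (use imax clM in auto)
  moreover have "C \<subseteq> {i. i < n \<and> d i = cmin}" by (rule closed_sub[of imin]) (use imin clm in auto)
  ultimately have dk: "d k = cmax" "d k = cmin" using k_in by auto
  have "u i = u0 r i + u k" if "i < n" for i
    using le_max[OF that] ge_min[OF that] dk uu[of i] uu[of k] u0k[of r] by simp
  then show ?thesis using lam by blast
qed

lemma S_sub_P: "Sset \<subseteq> Pcone n E Vmax \<sigma> \<tau>"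
proof
  fix r assume r: "r \<in> Sset"
  have w: "r \<in> weights E" using r by (simp add: Sset_def)
  have uniq: "\<sigma>' = \<sigma> \<and> \<tau>' = \<tau>" if b: "bias_induced_pair n E Vmax r \<sigma>' \<tau>'" for \<sigma>' \<tau>'
  proof -
    obtain lam u where sol: "ergodic_sol n E Vmax r lam u"
      and es: "\<forall>i\<in>Vmax. r (i, \<sigma>' i) + u (\<sigma>' i) = lam + u i"
      and et: "\<forall>i\<in>Vmin n Vmax. r (i, \<tau>' i) + u (\<tau>' i) = lam + u i"
      and ps: "max_policy E Vmax \<sigma>'" and pt: "min_policy n E Vmax \<tau>'"
      using b unfolding bias_induced_pair_def by blast
    obtain c where U: "lam = lam0 r" "\<forall>i<n. u i = u0 r i + c" using S_uniq[OF r sol] by blast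
    have "\<sigma>' i = \<sigma> i" for i
    proof (cases "i \<in> Vmax")
      case True
      have e: "(i, \<sigma>' i) \<in> E" using ps True by (simp add: max_policy_def)
      have "u (\<sigma>' i) = u0 r (\<sigma>' i) + c" "u i = u0 r i + c" using U(2) E_lt[OF e] by blast+
      moreover have "r (i, \<sigma>' i) + u (\<sigma>' i) = lam + u i" using es True by blast
      ultimately have "r (i, \<sigma>' i) + u0 r (\<sigma>' i) = lam0 r + u0 r i" using U(1) by linarith
      then show ?thesis using S_max[OF r e True] by blast
    next
      case False
      have "\<sigma>' \<in> Vmax \<rightarrow>\<^sub>E UNIV" "\<sigma> \<in> Vmax \<rightarrow>\<^sub>E UNIV" using ps sig by (simp_all add: max_policy_def)
      then show ?thesis using False PiE_arb by metis
    qed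
    moreover have "\<tau>' i = \<tau> i" for i
    proof (cases "i \<in> Vmin n Vmax")
      case True
      have e: "(i, \<tau>' i) \<in> E" using pt True by (simp add: min_policy_def)
      have "u (\<tau>' i) = u0 r (\<tau>' i) + c" "u i = u0 r i + c" using U(2) E_lt[OF e] by blast+
      moreover have "r (i, \<tau>' i) + u (\<tau>' i) = lam + u i" using et True by blast
      ultimately have "r (i, \<tau>' i) + u0 r (\<tau>' i) = lam0 r + u0 r i" using U(1) by linarith
      then show ?thesis using S_min[OF r e True] by blast
    next
      case False
      have "\<tau>' \<in> Vmin n Vmax \<rightarrow>\<^sub>E UNIV" "\<tau> \<in> Vmin n Vmax \<rightarrow>\<^sub>E UNIV" using pt tau by (simp_all add: min_policy_def)
      then show ?thesis using False PiE_arb by metis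
    qed
    ultimately show ?thesis by (simp add: fun_eq_iff)
  qed
  show "r \<in> Pcone n E Vmax \<sigma> \<tau>" unfolding Pcone_def using w S_bias[OF r] uniq by blast
qed

lemma P_sub_S: "Pcone n E Vmax \<sigma> \<tau> \<subseteq> Sset"
proof
  fix r assume rP: "r \<in> Pcone n E Vmax \<sigma> \<tau>"
  have w: "r \<in> weights E" and b: "bias_induced_pair n E Vmax r \<sigma> \<tau>"
    and uq: "\<And>\<sigma>' \<tau>'. bias_induced_pair n E Vmax r \<sigma>' \<tau>' \<Longrightarrow> \<sigma>' = \<sigma> \<and> \<tau>' = \<tau>"
    using rP unfolding Pcone_def by auto
  obtain lam u where sol: "ergodic_sol n E Vmax r lam u"
      and es: "\<forall>i\<in>Vmax. r (i, \<sigma> i) + u (\<sigma> i) = lam + u i"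
      and et: "\<forall>i\<in>Vmin n Vmax. r (i, \<tau> i) + u (\<tau> i) = lam + u i"
    using b unfolding bias_induced_pair_def by blast
  have pot: "potential r lam u" unfolding potential_def
  proof (intro allI impI)
    fix i assume i: "i < n"
    show "lam + u i = r (i, f i) + u (f i)"
      by (rule Vcases[OF i]) (use es et f_max f_min in auto)
  qed
  obtain c where U: "lam = lam0 r" "\<forall>l<n. u l = u0 r l + c" using pot_char[OF pot] by blast
  have mx: "lam0 r + u0 r i - u0 r j > r (i, j)" if e: "(i, j) \<in> E" and i: "i \<in> Vmax" and j: "j \<noteq> \<sigma> i" for i j
  proof -
    have le: "r (i, j) + u j \<le> lam + u i" by (rule sol_max_ge[OF sol i e])
    have "r (i, j) + u j \<noteq> lam + u i"
    proof
      assume eq: "r (i, j) + u j = lam + u i"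
      have "bias_induced_pair n E Vmax r (\<sigma>(i := j)) \<tau>"
        unfolding bias_induced_pair_def
      proof (intro conjI exI)
        show "max_policy E Vmax (\<sigma>(i := j))"
          using sig e i by (auto simp: max_policy_def PiE_def extensional_def)
        show "min_policy n E Vmax \<tau>" by (rule tau)
        show "ergodic_sol n E Vmax r lam u" by (rule sol)
        show "\<forall>i'\<in>Vmax. r (i', (\<sigma>(i := j)) i') + u ((\<sigma>(i := j)) i') = lam + u i'"
          using es eq by auto
        show "\<forall>i\<in>Vmin n Vmax. r (i, \<tau> i) + u (\<tau> i) = lam + u i" by (rule et)
      qed
      then have "\<sigma>(i := j) = \<sigma>" using uq by blast
      then have "\<sigma> i = j" by (metis fun_upd_same)
      then show False using j by simp
    qed
    then have "r (i, j) + u j < lam + u i" using le by simp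
    then show ?thesis using U E_lt[OF e] by auto
  qed
  have mn: "lam0 r + u0 r i - u0 r j < r (i, j)" if e: "(i, j) \<in> E" and i: "i \<in> Vmin n Vmax" and j: "j \<noteq> \<tau> i" for i j
  proof -
    have le: "lam + u i \<le> r (i, j) + u j" by (rule sol_min_le[OF sol i e])
    have "r (i, j) + u j \<noteq> lam + u i"
    proof
      assume eq: "r (i, j) + u j = lam + u i"
      have "bias_induced_pair n E Vmax r \<sigma> (\<tau>(i := j))"
        unfolding bias_induced_pair_def
      proof (intro conjI exI)
        show "min_policy n E Vmax (\<tau>(i := j))"
          using tau e i by (auto simp: min_policy_def PiE_def extensional_def)
        show "max_policy E Vmax \<sigma>" by (rule sig)
        show "ergodic_sol n E Vmax r lam u" by (rule sol)
        show "\<forall>i'\<in>Vmin n Vmax. r (i', (\<tau>(i := j)) i') + u ((\<tau>(i := j)) i') = lam + u i'"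
          using et eq by auto
        show "\<forall>i\<in>Vmax. r (i, \<sigma> i) + u (\<sigma> i) = lam + u i" by (rule es)
      qed
      then have "\<tau>(i := j) = \<tau>" using uq by blast
      then have "\<tau> i = j" by (metis fun_upd_same)
      then show False using j by simp
    qed
    then have "lam + u i < r (i, j) + u j" using le by simp
    then show ?thesis using U E_lt[OF e] by auto
  qed
  show "r \<in> Sset" unfolding Sset_def using w mx mn by blast
qed

lemma P_eq_S: "Pcone n E Vmax \<sigma> \<tau> = Sset" using S_sub_P P_sub_S by blast

end


definition lin :: "(nat \<times> nat) set \<Rightarrow> ((nat \<times> nat \<Rightarrow> real) \<Rightarrow> real) \<Rightarrow> bool" where
  "lin E L \<longleftrightarrow> (\<exists>a. \<forall>r\<in>weights E. L r = (\<Sum>e\<in>E. a e * r e))"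

definition rep :: "(nat \<times> nat) set \<Rightarrow> ((nat \<times> nat \<Rightarrow> real) \<Rightarrow> real) \<Rightarrow> (nat \<times> nat \<Rightarrow> real)" where
  "rep E L = (SOME a. \<forall>r\<in>weights E. L r = (\<Sum>e\<in>E. a e * r e))"

lemma rep_eq: "lin E L \<Longrightarrow> r \<in> weights E \<Longrightarrow> (\<Sum>e\<in>E. rep E L e * r e) = L r"
proof -
  assume l: "lin E L" and r: "r \<in> weights E"
  let ?P = "\<lambda>a. \<forall>r\<in>weights E. L r = (\<Sum>e\<in>E. a e * r e)"
  have "?P (SOME a. ?P a)" using l unfolding lin_def by (rule someI_ex)
  then show ?thesis using r unfolding rep_def by simp
qed

lemma lin_comp: assumes "finite E" "e \<in> E" shows "lin E (\<lambda>r. r e)"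
  unfolding lin_def
proof (intro exI ballI)
  fix r :: "nat \<times> nat \<Rightarrow> real"
  have "(\<Sum>e'\<in>E. (if e' = e then 1 else 0) * r e') = (\<Sum>e'\<in>E. (if e' = e then r e' else 0))"
    by (intro sum.cong) auto
  also have "\<dots> = r e" using assms by (simp add: sum.delta')
  finally show "r e = (\<Sum>e'\<in>E. (if e' = e then 1 else 0) * r e')" by simp
qed

lemma lin_add: "lin E L1 \<Longrightarrow> lin E L2 \<Longrightarrow> lin E (\<lambda>r. L1 r + L2 r)"
  unfolding lin_def
proof (elim exE)
  fix a b assume a: "\<forall>r\<in>weights E. L1 r = (\<Sum>e\<in>E. a e * r e)" and b: "\<forall>r\<in>weights E. L2 r = (\<Sum>e\<in>E. b e * r e)"
  show "\<exists>c. \<forall>r\<in>weights E. L1 r + L2 r = (\<Sum>e\<in>E. c e * r e)"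
    by (rule exI[of _ "\<lambda>e. a e + b e"]) (simp add: a b distrib_right sum.distrib)
qed

lemma lin_scale: "lin E L \<Longrightarrow> lin E (\<lambda>r. c * L r)"
  unfolding lin_def
proof (elim exE)
  fix a assume a: "\<forall>r\<in>weights E. L r = (\<Sum>e\<in>E. a e * r e)"
  show "\<exists>b. \<forall>r\<in>weights E. c * L r = (\<Sum>e\<in>E. b e * r e)"
    by (rule exI[of _ "\<lambda>e. c * a e"]) (simp add: a sum_distrib_left mult.assoc)
qed

lemma lin_neg: "lin E L \<Longrightarrow> lin E (\<lambda>r. - L r)"
  using lin_scale[of E L "-1"] by simp

lemma lin_diff: "lin E L1 \<Longrightarrow> lin E L2 \<Longrightarrow> lin E (\<lambda>r. L1 r - L2 r)"
  using lin_add[of E L1 "\<lambda>r. - L2 r"] lin_neg[of E L2] by simp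

lemma lin_div: "lin E L \<Longrightarrow> lin E (\<lambda>r. L r / c)"
  using lin_scale[of E L "1 / c"] by simp

lemma lin_zero: "lin E (\<lambda>r. 0)"
  unfolding lin_def by (rule exI[of _ "\<lambda>e. 0"]) simp

lemma lin_sum: "finite I \<Longrightarrow> (\<And>i. i \<in> I \<Longrightarrow> lin E (L i)) \<Longrightarrow> lin E (\<lambda>r. \<Sum>i\<in>I. L i r)"
proof (induction I rule: finite_induct)
  case empty then show ?case by (simp add: lin_zero)
next
  case (insert x F)
  then show ?case using lin_add[of E "L x" "\<lambda>r. \<Sum>i\<in>F. L i r"] by simp
qed

definition Lf :: "nat \<Rightarrow> nat set \<Rightarrow> (nat \<Rightarrow> nat) \<Rightarrow> (nat \<Rightarrow> nat) \<Rightarrow> nat \<Rightarrow> nat \<Rightarrow> (nat \<times> nat \<Rightarrow> real) \<Rightarrow> real" where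
  "Lf n Vmax \<sigma> \<tau> i j r = lam_pol n Vmax \<sigma> \<tau> r + u_pol n Vmax \<sigma> \<tau> r i - u_pol n Vmax \<sigma> \<tau> r j - r (i, j)"

context pairXi
begin

lemma lin_lam: "lin E lam0"
proof -
  have "lam0 = (\<lambda>r. (\<Sum>i\<in>C. r (i, f i)) / real (card C))" by (rule ext) (rule lam_pol_eq)
  moreover have "lin E (\<lambda>r. (\<Sum>i\<in>C. r (i, f i)) / real (card C))"
  proof (rule lin_div, rule lin_sum[OF C_fin])
    fix i assume "i \<in> C"
    then have "i < n" using C_sub by auto
    then show "lin E (\<lambda>r. r (i, f i))" by (intro lin_comp finE f_edge)
  qed
  ultimately show ?thesis by simp
qed

lemma lin_u: assumes l: "l < n" shows "lin E (\<lambda>r. u0 r l)"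
proof -
  have "(\<lambda>r. u0 r l) = (\<lambda>r. \<Sum>s<T l. r ((f ^^ s) l, (f ^^ Suc s) l) - lam0 r)" by (rule ext) (rule u_pol_eq)
  moreover have "((f ^^ s) l, (f ^^ Suc s) l) \<in> E" for s using f_edge[OF fpow_lt[OF l, of s]] by simp
  then have "lin E (\<lambda>r. \<Sum>s<T l. r ((f ^^ s) l, (f ^^ Suc s) l) - lam0 r)"
    by (intro lin_sum finite_lessThan lin_diff lin_lam lin_comp[OF finE])
  ultimately show ?thesis by simp
qed

lemma lin_Lf: assumes e: "(i, j) \<in> E" shows "lin E (Lf n Vmax \<sigma> \<tau> i j)"
proof -
  have "Lf n Vmax \<sigma> \<tau> i j = (\<lambda>r. lam0 r + u0 r i - u0 r j - r (i, j))" by (rule ext) (simp add: Lf_def)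
  moreover have "lin E (\<lambda>r. lam0 r + u0 r i - u0 r j - r (i, j))"
    using E_lt[OF e] by (intro lin_diff lin_add lin_lam lin_u lin_comp[OF finE e]) auto
  ultimately show ?thesis by simp
qed

lemma cone: "open_polyhedral_cone E Sset"
proof -
  define A1 where "A1 = (\<lambda>e. rep E (Lf n Vmax \<sigma> \<tau> (fst e) (snd e))) ` {(i, j). (i, j) \<in> E \<and> i \<in> Vmax \<and> j \<noteq> \<sigma> i}"
  define A2 where "A2 = (\<lambda>e. rep E (\<lambda>r. - Lf n Vmax \<sigma> \<tau> (fst e) (snd e) r)) ` {(i, j). (i, j) \<in> E \<and> i \<in> Vmin n Vmax \<and> j \<noteq> \<tau> i}"
  have fin: "finite (A1 \<union> A2)" unfolding A1_def A2_def
    by (intro finite_UnI finite_imageI; rule finite_subset[OF _ finE]; auto)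
  have k1: "(\<Sum>e\<in>E. rep E (Lf n Vmax \<sigma> \<tau> i j) e * r e) = Lf n Vmax \<sigma> \<tau> i j r"
    if "r \<in> weights E" "(i, j) \<in> E" for r i j using rep_eq[OF lin_Lf that(1)] that by blast
  have k2: "(\<Sum>e\<in>E. rep E (\<lambda>r. - Lf n Vmax \<sigma> \<tau> i j r) e * r e) = - Lf n Vmax \<sigma> \<tau> i j r"
    if "r \<in> weights E" "(i, j) \<in> E" for r i j using rep_eq[OF lin_neg[OF lin_Lf] that(1)] that by blast
  have "Sset = {r \<in> weights E. \<forall>a\<in>A1 \<union> A2. (\<Sum>e\<in>E. a e * r e) > 0}"
  proof (intro set_eqI iffI)
    fix r assume r: "r \<in> Sset"
    then have w: "r \<in> weights E" by (simp add: Sset_def)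
    have "(\<Sum>e\<in>E. a e * r e) > 0" if a: "a \<in> A1 \<union> A2" for a
    proof (cases "a \<in> A1")
      case True
      then obtain i j where ij: "(i, j) \<in> E" "i \<in> Vmax" "j \<noteq> \<sigma> i" "a = rep E (Lf n Vmax \<sigma> \<tau> i j)"
        unfolding A1_def by auto
      then have "Lf n Vmax \<sigma> \<tau> i j r > 0" using r unfolding Sset_def Lf_def by auto
      then show ?thesis using k1[OF w ij(1)] ij(4) by simp
    next
      case False
      then have "a \<in> A2" using a by blast
      then obtain i j where ij: "(i, j) \<in> E" "i \<in> Vmin n Vmax" "j \<noteq> \<tau> i" "a = rep E (\<lambda>r. - Lf n Vmax \<sigma> \<tau> i j r)"
        unfolding A2_def by auto
      then have "Lf n Vmax \<sigma> \<tau> i j r < 0" using r unfolding Sset_def Lf_def by auto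
      then show ?thesis using k2[OF w ij(1)] ij(4) by simp
    qed
    then show "r \<in> {r \<in> weights E. \<forall>a\<in>A1 \<union> A2. (\<Sum>e\<in>E. a e * r e) > 0}" using w by blast
  next
    fix r assume r: "r \<in> {r \<in> weights E. \<forall>a\<in>A1 \<union> A2. (\<Sum>e\<in>E. a e * r e) > 0}"
    then have w: "r \<in> weights E" and pos: "\<And>a. a \<in> A1 \<union> A2 \<Longrightarrow> (\<Sum>e\<in>E. a e * r e) > 0" by auto
    have c1: "Lf n Vmax \<sigma> \<tau> i j r > 0" if "(i, j) \<in> E" "i \<in> Vmax" "j \<noteq> \<sigma> i" for i j
    proof -
      have "rep E (Lf n Vmax \<sigma> \<tau> i j) \<in> A1" unfolding A1_def using that by force
      then show ?thesis using pos k1[OF w that(1)] by fastforce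
    qed
    have c2: "Lf n Vmax \<sigma> \<tau> i j r < 0" if "(i, j) \<in> E" "i \<in> Vmin n Vmax" "j \<noteq> \<tau> i" for i j
    proof -
      have "rep E (\<lambda>r. - Lf n Vmax \<sigma> \<tau> i j r) \<in> A2" unfolding A2_def using that by force
      then have "(\<Sum>e\<in>E. rep E (\<lambda>r. - Lf n Vmax \<sigma> \<tau> i j r) e * r e) > 0" using pos by blast
      then show ?thesis using k2[OF w that(1)] by simp
    qed
    show "r \<in> Sset" unfolding Sset_def using w c1 c2 by (auto simp: Lf_def)
  qed
  then show ?thesis unfolding open_polyhedral_cone_def using fin by blast
qed

end


definition ed :: "(nat \<Rightarrow> nat) \<Rightarrow> nat set \<Rightarrow> (nat \<times> nat) set" where
  "ed g C = (\<lambda>i. (i, g i)) ` C"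

definition cyc_a :: "(nat \<Rightarrow> nat) \<Rightarrow> nat set \<Rightarrow> nat set \<Rightarrow> (nat \<times> nat \<Rightarrow> real)" where
  "cyc_a g C1 C2 e = real (card C2) * (if e \<in> ed g C1 then 1 else 0) - real (card C1) * (if e \<in> ed g C2 then 1 else 0)"

context pol
begin

lemma sum_ed:
  fixes r :: "nat \<times> nat \<Rightarrow> real"
  assumes C: "C \<subseteq> {..<n}"
  shows "(\<Sum>e\<in>E. (if e \<in> ed f C then 1 else 0) * r e) = (\<Sum>i\<in>C. r (i, f i))"
proof -
  have sub: "ed f C \<subseteq> E" using C f_edge by (auto simp: ed_def)
  have "(\<Sum>e\<in>E. (if e \<in> ed f C then 1 else 0) * r e) = (\<Sum>e\<in>E. if e \<in> ed f C then r e else 0)"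
    by (intro sum.cong) auto
  also have "\<dots> = (\<Sum>e\<in>E \<inter> ed f C. r e)" using sum.inter_restrict[OF finE, of r "ed f C"] by simp
  also have "E \<inter> ed f C = ed f C" using sub by blast
  also have "(\<Sum>e\<in>ed f C. r e) = (\<Sum>i\<in>C. r (i, f i))" unfolding ed_def
    by (subst sum.reindex) (auto simp: inj_on_def)
  finally show ?thesis .
qed

lemma cyc_a_sum:
  fixes r :: "nat \<times> nat \<Rightarrow> real"
  assumes "C1 \<subseteq> {..<n}" "C2 \<subseteq> {..<n}"
  shows "(\<Sum>e\<in>E. cyc_a f C1 C2 e * r e) = real (card C2) * (\<Sum>i\<in>C1. r (i, f i)) - real (card C1) * (\<Sum>i\<in>C2. r (i, f i))"
proof -
  have "(\<Sum>e\<in>E. cyc_a f C1 C2 e * r e) = real (card C2) * (\<Sum>e\<in>E. (if e \<in> ed f C1 then 1 else 0) * r e) - real (card C1) * (\<Sum>e\<in>E. (if e \<in> ed f C2 then 1 else 0) * r e)"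
    unfolding cyc_a_def by (simp add: sum_subtractf sum_distrib_left left_diff_distrib mult.assoc)
  then show ?thesis using sum_ed[OF assms(1), of r] sum_ed[OF assms(2), of r] by simp
qed

lemma cyc_a_nz:
  assumes C1: "C1 \<in> fcycles f {..<n}" and C2: "C2 \<in> fcycles f {..<n}" and ne: "C1 \<noteq> C2"
  shows "\<exists>e\<in>E. cyc_a f C1 C2 e \<noteq> 0"
proof -
  have p1: "card C1 > 0" and p2: "card C2 > 0" using cyc_fin cyc_ne C1 C2 card_gt_0_iff by blast+
  have mem: "(i, f i) \<in> ed f C \<longleftrightarrow> i \<in> C" for i C by (auto simp: ed_def)
  show ?thesis
  proof (cases "C1 \<subseteq> C2")
    case True
    then obtain i where i: "i \<in> C2" "i \<notin> C1" using ne by blast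
    then have "cyc_a f C1 C2 (i, f i) = - real (card C1)" by (simp add: cyc_a_def mem)
    moreover have "(i, f i) \<in> E" using f_edge cyc_sub[OF C2] i by auto
    ultimately show ?thesis using p1 by force
  next
    case False
    then obtain i where i: "i \<in> C1" "i \<notin> C2" by blast
    then have "cyc_a f C1 C2 (i, f i) = real (card C2)" by (simp add: cyc_a_def mem)
    moreover have "(i, f i) \<in> E" using f_edge cyc_sub[OF C1] i by auto
    ultimately show ?thesis using p2 by force
  qed
qed

end

context pairXi
begin

lemma Lf_nz:
  assumes e: "(i, j) \<in> E" and nj: "f i \<noteq> j"
  shows "\<exists>e\<in>E. rep E (Lf n Vmax \<sigma> \<tau> i j) e \<noteq> 0"
proof (rule ccontr)
  assume "\<not> ?thesis"
  then have z: "\<forall>e\<in>E. rep E (Lf n Vmax \<sigma> \<tau> i j) e = 0" by blast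
  define \<delta> where "\<delta> = restrict (\<lambda>e. if e = (i, j) then 1 else (0::real)) E"
  have w: "\<delta> \<in> weights E" by (simp add: \<delta>_def weights_def)
  have dz: "\<delta> (x, f x) = 0" if "x < n" for x
    using f_edge[OF that] nj by (auto simp: \<delta>_def)
  have l0: "lam0 \<delta> = 0" using C_sub dz by (simp add: lam_pol_eq subset_iff)
  have u0: "u0 \<delta> l = 0" if "l < n" for l
    using dz[OF fpow_lt[OF that]] l0 by (simp add: u_pol_eq)
  have "Lf n Vmax \<sigma> \<tau> i j \<delta> = -1" using u0 E_lt[OF e] l0 e by (simp add: Lf_def \<delta>_def)
  moreover have "(\<Sum>e\<in>E. rep E (Lf n Vmax \<sigma> \<tau> i j) e * \<delta> e) = Lf n Vmax \<sigma> \<tau> i j \<delta>"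
    by (rule rep_eq[OF lin_Lf[OF e] w])
  ultimately show False using z by simp
qed

end


context game
begin

definition "PolMax = {\<sigma>. max_policy E Vmax \<sigma>}"
definition "PolMin = {\<tau>. min_policy n E Vmax \<tau>}"

lemma PolMax_fin: "finite PolMax"
proof -
  have "PolMax \<subseteq> Vmax \<rightarrow>\<^sub>E {..<n}" using E_lt by (auto simp: PolMax_def max_policy_def PiE_def)
  moreover have "finite Vmax" using Vmax_sub finite_subset by blast
  ultimately show ?thesis using finite_PiE finite_subset by (metis finite_lessThan)
qed

lemma PolMin_fin: "finite PolMin"
proof -
  have "PolMin \<subseteq> Vmin n Vmax \<rightarrow>\<^sub>E {..<n}" using E_lt by (auto simp: PolMin_def min_policy_def PiE_def)
  moreover have "finite (Vmin n Vmax)" by (simp add: Vmin_def)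
  ultimately show ?thesis using finite_PiE finite_subset by (metis finite_lessThan)
qed

lemma Xi_sub: "Xi n E Vmax \<subseteq> PolMax \<times> PolMin" by (auto simp: Xi_def PolMax_def PolMin_def)

lemma Xi_fin: "finite (Xi n E Vmax)" using Xi_sub PolMax_fin PolMin_fin finite_subset by blast

lemma Xi_pairXi: "(\<sigma>, \<tau>) \<in> Xi n E Vmax \<Longrightarrow> pairXi n E Vmax \<sigma> \<tau>"
  unfolding Xi_def pairXi_def pol_def pairXi_axioms_def pol_axioms_def using game_axioms by auto

definition "H1 = (\<lambda>(\<sigma>, \<tau>, i, j). (rep E (Lf n Vmax \<sigma> \<tau> i j), 0::real)) `
   {(\<sigma>, \<tau>, i, j). (\<sigma>, \<tau>) \<in> Xi n E Vmax \<and> (i, j) \<in> E \<and> succ_pol Vmax \<sigma> \<tau> i \<noteq> j}"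

definition "H2 = (\<lambda>(\<sigma>, \<tau>, C1, C2). (cyc_a (succ_pol Vmax \<sigma> \<tau>) C1 C2, 0::real)) `
   {(\<sigma>, \<tau>, C1, C2). \<sigma> \<in> PolMax \<and> \<tau> \<in> PolMin \<and> C1 \<in> fcycles (succ_pol Vmax \<sigma> \<tau>) {..<n} \<and>
       C2 \<in> fcycles (succ_pol Vmax \<sigma> \<tau>) {..<n} \<and> C1 \<noteq> C2}"

lemma pol_of: "\<sigma> \<in> PolMax \<Longrightarrow> \<tau> \<in> PolMin \<Longrightarrow> pol n E Vmax \<sigma> \<tau>"
  unfolding pol_def pol_axioms_def PolMax_def PolMin_def using game_axioms by auto

lemma H_fin: "finite (H1 \<union> H2)"
proof -
  have "{(\<sigma>, \<tau>, i, j). (\<sigma>, \<tau>) \<in> Xi n E Vmax \<and> (i, j) \<in> E \<and> succ_pol Vmax \<sigma> \<tau> i \<noteq> j}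
      \<subseteq> (\<lambda>((\<sigma>, \<tau>), (i, j)). (\<sigma>, \<tau>, i, j)) ` (Xi n E Vmax \<times> E)" by force
  then have f1: "finite H1" unfolding H1_def using Xi_fin finE by (meson finite_SigmaI finite_imageI finite_subset)
  have "{(\<sigma>, \<tau>, C1, C2). \<sigma> \<in> PolMax \<and> \<tau> \<in> PolMin \<and> C1 \<in> fcycles (succ_pol Vmax \<sigma> \<tau>) {..<n} \<and>
       C2 \<in> fcycles (succ_pol Vmax \<sigma> \<tau>) {..<n} \<and> C1 \<noteq> C2} \<subseteq> PolMax \<times> PolMin \<times> Pow {..<n} \<times> Pow {..<n}"
    using pol.cyc_sub[OF pol_of] by blast
  then have f2: "finite H2" unfolding H2_def using PolMax_fin PolMin_fin
    by (meson finite_SigmaI finite_imageI finite_subset finite_Pow_iff finite_lessThan)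
  show ?thesis using f1 f2 by simp
qed

lemma H_nz: "(a, b) \<in> H1 \<union> H2 \<Longrightarrow> \<exists>e\<in>E. a e \<noteq> 0"
proof (elim UnE)
  assume "(a, b) \<in> H1"
  then obtain \<sigma> \<tau> i j where "(\<sigma>, \<tau>) \<in> Xi n E Vmax" "(i, j) \<in> E" "succ_pol Vmax \<sigma> \<tau> i \<noteq> j"
    "a = rep E (Lf n Vmax \<sigma> \<tau> i j)" unfolding H1_def by auto
  then show ?thesis using pairXi.Lf_nz[OF Xi_pairXi] by blast
next
  assume "(a, b) \<in> H2"
  then obtain \<sigma> \<tau> C1 C2 where "\<sigma> \<in> PolMax" "\<tau> \<in> PolMin" "C1 \<in> fcycles (succ_pol Vmax \<sigma> \<tau>) {..<n}"
    "C2 \<in> fcycles (succ_pol Vmax \<sigma> \<tau>) {..<n}" "C1 \<noteq> C2" "a = cyc_a (succ_pol Vmax \<sigma> \<tau>) C1 C2"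
    unfolding H2_def by auto
  then show ?thesis using pol.cyc_a_nz[OF pol_of] by blast
qed

end


context game
begin

lemma generic:
  assumes erg: "ergodic_graph n E Vmax" and n1: "n \<ge> 1"
    and w: "r \<in> weights E" and nh: "\<And>a b. (a, b) \<in> H1 \<union> H2 \<Longrightarrow> r \<notin> hyperplane E a b"
  shows "r \<in> Ucones n E Vmax"
proof -
  obtain lam u where sol: "ergodic_sol n E Vmax r lam u" using erg w unfolding ergodic_graph_def by blast
  define \<sigma> where "\<sigma> = restrict (\<lambda>i. SOME j. (i, j) \<in> E \<and> lam + u i = r (i, j) + u j) Vmax"
  define \<tau> where "\<tau> = restrict (\<lambda>i. SOME j. (i, j) \<in> E \<and> lam + u i = r (i, j) + u j) (Vmin n Vmax)"
  have sp: "(i, \<sigma> i) \<in> E \<and> lam + u i = r (i, \<sigma> i) + u (\<sigma> i)" if i: "i \<in> Vmax" for i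
    using someI_ex[OF sol_max_att[OF sol i]] i by (simp add: \<sigma>_def)
  have tp: "(i, \<tau> i) \<in> E \<and> lam + u i = r (i, \<tau> i) + u (\<tau> i)" if i: "i \<in> Vmin n Vmax" for i
    using someI_ex[OF sol_min_att[OF sol i]] i by (simp add: \<tau>_def)
  have sP: "\<sigma> \<in> PolMax" unfolding PolMax_def max_policy_def
  proof (intro CollectI conjI ballI)
    show "\<sigma> \<in> Vmax \<rightarrow>\<^sub>E UNIV" unfolding \<sigma>_def by simp
    show "(i, \<sigma> i) \<in> E" if "i \<in> Vmax" for i using sp[OF that] by blast
  qed
  have tP: "\<tau> \<in> PolMin" unfolding PolMin_def min_policy_def
  proof (intro CollectI conjI ballI)
    show "\<tau> \<in> Vmin n Vmax \<rightarrow>\<^sub>E UNIV" unfolding \<tau>_def by simp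
    show "(i, \<tau> i) \<in> E" if "i \<in> Vmin n Vmax" for i using tp[OF that] by blast
  qed
  interpret P: pol n E Vmax \<sigma> \<tau> by (rule pol_of[OF sP tP])
  have pot: "P.potential r lam u" unfolding P.potential_def
  proof (intro allI impI)
    fix i assume i: "i < n"
    show "lam + u i = r (i, P.f i) + u (P.f i)"
    proof (cases "i \<in> Vmax")
      case True then show ?thesis using sp by (simp add: succ_pol_def)
    next
      case False then have "i \<in> Vmin n Vmax" using i by (simp add: Vmin_iff)
      then show ?thesis using tp False by (simp add: succ_pol_def)
    qed
  qed
  have one: "card (fcycles P.f {..<n}) = 1"
  proof -
    have "\<forall>C1\<in>fcycles P.f {..<n}. \<forall>C2\<in>fcycles P.f {..<n}. C1 = C2"
    proof (intro ballI, rule ccontr)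
      fix C1 C2 assume C1: "C1 \<in> fcycles P.f {..<n}" and C2: "C2 \<in> fcycles P.f {..<n}" and ne: "C1 \<noteq> C2"
      have "(cyc_a P.f C1 C2, 0) \<in> H2" unfolding H2_def
        by (rule image_eqI[where x="(\<sigma>, \<tau>, C1, C2)"]) (use sP tP C1 C2 ne in auto)
      then have inH: "(cyc_a P.f C1 C2, 0) \<in> H1 \<union> H2" by blast
      have e1: "real (card C1) * lam = (\<Sum>i\<in>C1. r (i, P.f i))" by (rule P.cyc_sum[OF C1 pot])
      have e2: "real (card C2) * lam = (\<Sum>i\<in>C2. r (i, P.f i))" by (rule P.cyc_sum[OF C2 pot])
      have "(\<Sum>e\<in>E. cyc_a P.f C1 C2 e * r e) = 0"
      proof -
        have "(\<Sum>e\<in>E. cyc_a P.f C1 C2 e * r e) = real (card C2) * (real (card C1) * lam) - real (card C1) * (real (card C2) * lam)"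
          using P.cyc_a_sum[OF P.cyc_sub[OF C1] P.cyc_sub[OF C2], of r] e1 e2 by simp
        then show ?thesis by (simp add: algebra_simps)
      qed
      then have "r \<in> hyperplane E (cyc_a P.f C1 C2) 0" using w by (simp add: hyperplane_def)
      then show False using nh[OF inH] by blast
    qed
    then have "card (fcycles P.f {..<n}) \<le> Suc 0" using card_le_Suc0_iff_eq[OF P.cycles_fin] by blast
    moreover have "card (fcycles P.f {..<n}) > 0" using P.cycles_fin P.cycles_ne[OF n1] card_gt_0_iff by blast
    ultimately show ?thesis by simp
  qed
  have xi: "(\<sigma>, \<tau>) \<in> Xi n E Vmax" using sP tP one by (simp add: Xi_def PolMax_def PolMin_def)
  interpret X: pairXi n E Vmax \<sigma> \<tau> by (rule Xi_pairXi[OF xi])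
  obtain c where U: "lam = X.lam0 r" "\<forall>l<n. u l = X.u0 r l + c" using X.pot_char[OF pot] by blast
  have nLf: "Lf n Vmax \<sigma> \<tau> i j r \<noteq> 0" if e: "(i, j) \<in> E" and nj: "P.f i \<noteq> j" for i j
  proof
    assume z: "Lf n Vmax \<sigma> \<tau> i j r = 0"
    have "(rep E (Lf n Vmax \<sigma> \<tau> i j), 0) \<in> H1" unfolding H1_def
      by (rule image_eqI[where x="(\<sigma>, \<tau>, i, j)"]) (use xi e nj in auto)
    then have inH: "(rep E (Lf n Vmax \<sigma> \<tau> i j), 0) \<in> H1 \<union> H2" by blast
    have "(\<Sum>e\<in>E. rep E (Lf n Vmax \<sigma> \<tau> i j) e * r e) = 0" using rep_eq[OF X.lin_Lf[OF e] w] z by simp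
    then have "r \<in> hyperplane E (rep E (Lf n Vmax \<sigma> \<tau> i j)) 0" using w by (simp add: hyperplane_def)
    then show False using nh[OF inH] by blast
  qed
  have "r \<in> X.Sset" unfolding X.Sset_def
  proof (intro CollectI conjI w ballI, clarify)
    fix i j assume e: "(i, j) \<in> E"
    have ij: "i < n" "j < n" using E_lt[OF e] by auto
    have uij: "u i = X.u0 r i + c" "u j = X.u0 r j + c" using U(2) ij by blast+
    show "(i \<in> Vmax \<and> j \<noteq> \<sigma> i \<longrightarrow> r (i, j) < X.lam0 r + X.u0 r i - X.u0 r j) \<and>
          (i \<in> Vmin n Vmax \<and> j \<noteq> \<tau> i \<longrightarrow> X.lam0 r + X.u0 r i - X.u0 r j < r (i, j))"
    proof (intro conjI impI; elim conjE)
      assume i: "i \<in> Vmax" and j: "j \<noteq> \<sigma> i"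
      have "r (i, j) + u j \<le> lam + u i" by (rule sol_max_ge[OF sol i e])
      moreover have "Lf n Vmax \<sigma> \<tau> i j r \<noteq> 0" using nLf[OF e] j i by (simp add: succ_pol_def)
      ultimately show "r (i, j) < X.lam0 r + X.u0 r i - X.u0 r j" using U(1) uij unfolding Lf_def by linarith
    next
      assume i: "i \<in> Vmin n Vmax" and j: "j \<noteq> \<tau> i"
      have "lam + u i \<le> r (i, j) + u j" by (rule sol_min_le[OF sol i e])
      moreover have "Lf n Vmax \<sigma> \<tau> i j r \<noteq> 0" using nLf[OF e] j i by (simp add: succ_pol_def Vmin_iff)
      ultimately show "X.lam0 r + X.u0 r i - X.u0 r j < r (i, j)" using U(1) uij unfolding Lf_def by linarith
    qed
  qed
  then have "r \<in> Pcone n E Vmax \<sigma> \<tau>" using X.S_sub_P by blast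
  then show ?thesis unfolding Ucones_def using xi by blast
qed

end


lemma cone_sets:
  assumes "finite E" "finite A"
  shows "{r \<in> weights E. \<forall>a\<in>A. (\<Sum>e\<in>E. a e * r e) > 0} \<in> sets (PiM E (\<lambda>_. lborel))"
proof -
  have "{r \<in> weights E. \<forall>a\<in>A. (\<Sum>e\<in>E. a e * r e) > 0} = {r \<in> space (PiM E (\<lambda>_. lborel)). \<forall>a\<in>A. (\<Sum>e\<in>E. a e * r e) > 0}"
    by (simp add: weights_def space_PiM)
  also have "\<dots> \<in> sets (PiM E (\<lambda>_. lborel))"
  proof (rule sets.sets_Collect_finite_All[OF _ assms(2)])
    fix a :: "nat \<times> nat \<Rightarrow> real"
    have comp: "(\<lambda>r::nat \<times> nat \<Rightarrow> real. r e) \<in> borel_measurable (PiM E (\<lambda>_. lborel))" if "e \<in> E" for e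
      using measurable_component_singleton[OF that, of "\<lambda>_. lborel"] by simp
    have F: "(\<lambda>r. \<Sum>e\<in>E. a e * r e) \<in> borel_measurable (PiM E (\<lambda>_. lborel))"
    proof (rule borel_measurable_sum)
      fix e assume "e \<in> E"
      then show "(\<lambda>r. a e * r e) \<in> borel_measurable (PiM E (\<lambda>_. lborel))"
        using comp[OF \<open>e \<in> E\<close>] by measurable
    qed
    have "(\<lambda>r. \<Sum>e\<in>E. a e * r e) -` {0<..} \<inter> space (PiM E (\<lambda>_. lborel)) \<in> sets (PiM E (\<lambda>_. lborel))"
      by (rule measurable_sets[OF F]) simp
    moreover have "(\<lambda>r. \<Sum>e\<in>E. a e * r e) -` {0<..} \<inter> space (PiM E (\<lambda>_. lborel)) = {r \<in> space (PiM E (\<lambda>_. lborel)). (\<Sum>e\<in>E. a e * r e) > 0}"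
      by auto
    ultimately show "{r \<in> space (PiM E (\<lambda>_. lborel)). (\<Sum>e\<in>E. a e * r e) > 0} \<in> sets (PiM E (\<lambda>_. lborel))"
      by simp
  qed
  finally show ?thesis .
qed

lemma null_subset: "B \<in> null_sets M \<Longrightarrow> A \<in> sets M \<Longrightarrow> A \<subseteq> B \<Longrightarrow> A \<in> null_sets M"
proof -
  assume B: "B \<in> null_sets M" and A: "A \<in> sets M" and AB: "A \<subseteq> B"
  have "emeasure M A \<le> emeasure M B" using AB B by (intro emeasure_mono) auto
  moreover have "emeasure M B = 0" using B by (rule null_setsD1)
  ultimately have "emeasure M A = 0" by simp
  then show ?thesis using A by (rule null_setsI)
qed

theorem mainTheorem10:
  fixes n :: nat and E :: "(nat \<times> nat) set" and Vmax :: "nat set"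
  assumes "n \<ge> 1"
    and "E \<subseteq> {..<n} \<times> {..<n}"
    and "Vmax \<subseteq> {..<n}"
    and "\<forall>i<n. \<exists>j. (i, j) \<in> E"
    and "ergodic_graph n E Vmax"
  shows
    "(\<forall>(\<sigma>, \<tau>) \<in> Xi n E Vmax.
        Pcone n E Vmax \<sigma> \<tau> =
          {r \<in> weights E. \<forall>(i, j) \<in> E.
             (i \<in> Vmax \<and> j \<noteq> \<sigma> i \<longrightarrow>
                lam_pol n Vmax \<sigma> \<tau> r + u_pol n Vmax \<sigma> \<tau> r i - u_pol n Vmax \<sigma> \<tau> r j > r (i, j)) \<and>
             (i \<in> Vmin n Vmax \<and> j \<noteq> \<tau> i \<longrightarrow>
                lam_pol n Vmax \<sigma> \<tau> r + u_pol n Vmax \<sigma> \<tau> r i - u_pol n Vmax \<sigma> \<tau> r j < r (i, j))})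
     \<and> (\<forall>(\<sigma>, \<tau>) \<in> Xi n E Vmax. open_polyhedral_cone E (Pcone n E Vmax \<sigma> \<tau>))
     \<and> (\<forall>p \<in> Xi n E Vmax. \<forall>q \<in> Xi n E Vmax. p \<noteq> q \<longrightarrow>
          Pcone n E Vmax (fst p) (snd p) \<inter> Pcone n E Vmax (fst q) (snd q) = {})
     \<and> (\<exists>H. finite H \<and> (\<forall>(a, b) \<in> H. \<exists>e\<in>E. a e \<noteq> 0) \<and>
          weights E - Ucones n E Vmax \<subseteq> (\<Union>(a, b) \<in> H. hyperplane E a b))
     \<and> weights E - Ucones n E Vmax \<in> null_sets (PiM E (\<lambda>_. lborel))
     \<and> (\<forall>r \<in> Ucones n E Vmax.
          (\<forall>lam u lam' u'. ergodic_sol n E Vmax r lam u \<and> ergodic_sol n E Vmax r lam' u' \<longrightarrow>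
              lam' = lam \<and> (\<exists>c. \<forall>i<n. u' i = u i + c)) \<and>
          (\<forall>lam u. ergodic_sol n E Vmax r lam u \<longrightarrow>
              (\<forall>i\<in>Vmax. \<exists>!j. (i, j) \<in> E \<and> r (i, j) + u j = lam + u i) \<and>
              (\<forall>i\<in>Vmin n Vmax. \<exists>!j. (i, j) \<in> E \<and> r (i, j) + u j = lam + u i)))"
proof -
  interpret game n E Vmax using assms by unfold_locales auto
  have P1: "\<forall>(\<sigma>, \<tau>) \<in> Xi n E Vmax.
        Pcone n E Vmax \<sigma> \<tau> =
          {r \<in> weights E. \<forall>(i, j) \<in> E.
             (i \<in> Vmax \<and> j \<noteq> \<sigma> i \<longrightarrow>
                lam_pol n Vmax \<sigma> \<tau> r + u_pol n Vmax \<sigma> \<tau> r i - u_pol n Vmax \<sigma> \<tau> r j > r (i, j)) \<and>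
             (i \<in> Vmin n Vmax \<and> j \<noteq> \<tau> i \<longrightarrow>
                lam_pol n Vmax \<sigma> \<tau> r + u_pol n Vmax \<sigma> \<tau> r i - u_pol n Vmax \<sigma> \<tau> r j < r (i, j))}"
    apply clarify
    subgoal premises x for \<sigma> \<tau>
      by (simp only: pairXi.P_eq_S[OF Xi_pairXi[OF x]] pairXi.Sset_def[OF Xi_pairXi[OF x]])
    done
  have P2: "\<forall>(\<sigma>, \<tau>) \<in> Xi n E Vmax. open_polyhedral_cone E (Pcone n E Vmax \<sigma> \<tau>)"
  proof (clarify)
    fix \<sigma> \<tau> assume x: "(\<sigma>, \<tau>) \<in> Xi n E Vmax"
    show "open_polyhedral_cone E (Pcone n E Vmax \<sigma> \<tau>)"
      unfolding pairXi.P_eq_S[OF Xi_pairXi[OF x]] by (rule pairXi.cone[OF Xi_pairXi[OF x]])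
  qed
  have P3: "\<forall>p \<in> Xi n E Vmax. \<forall>q \<in> Xi n E Vmax. p \<noteq> q \<longrightarrow>
          Pcone n E Vmax (fst p) (snd p) \<inter> Pcone n E Vmax (fst q) (snd q) = {}"
  proof (intro ballI impI)
    fix p q :: "(nat \<Rightarrow> nat) \<times> (nat \<Rightarrow> nat)" assume "p \<noteq> q"
    show "Pcone n E Vmax (fst p) (snd p) \<inter> Pcone n E Vmax (fst q) (snd q) = {}"
    proof (rule ccontr)
      assume "Pcone n E Vmax (fst p) (snd p) \<inter> Pcone n E Vmax (fst q) (snd q) \<noteq> {}"
      then obtain r where r1: "r \<in> Pcone n E Vmax (fst p) (snd p)" and r2: "r \<in> Pcone n E Vmax (fst q) (snd q)" by blast
      from r2 have "bias_induced_pair n E Vmax r (fst q) (snd q)" by (simp add: Pcone_def)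
      moreover have "\<And>\<sigma>' \<tau>'. bias_induced_pair n E Vmax r \<sigma>' \<tau>' \<Longrightarrow> \<sigma>' = fst p \<and> \<tau>' = snd p"
        using r1 unfolding Pcone_def by blast
      ultimately have "fst q = fst p \<and> snd q = snd p" by blast
      then show False using \<open>p \<noteq> q\<close> by (simp add: prod_eq_iff)
    qed
  qed
  have sub: "weights E - Ucones n E Vmax \<subseteq> (\<Union>(a, b) \<in> H1 \<union> H2. hyperplane E a b)"
  proof
    fix r assume r: "r \<in> weights E - Ucones n E Vmax"
    show "r \<in> (\<Union>(a, b) \<in> H1 \<union> H2. hyperplane E a b)"
    proof (rule ccontr)
      assume "r \<notin> (\<Union>(a, b) \<in> H1 \<union> H2. hyperplane E a b)"
      then have "\<And>a b. (a, b) \<in> H1 \<union> H2 \<Longrightarrow> r \<notin> hyperplane E a b" by blast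
      then have "r \<in> Ucones n E Vmax" using generic[OF assms(5) assms(1)] r by blast
      then show False using r by blast
    qed
  qed
  have P4: "\<exists>H. finite H \<and> (\<forall>(a, b) \<in> H. \<exists>e\<in>E. a e \<noteq> 0) \<and>
          weights E - Ucones n E Vmax \<subseteq> (\<Union>(a, b) \<in> H. hyperplane E a b)"
  proof (intro exI[of _ "H1 \<union> H2"] conjI H_fin sub ballI, clarify)
    fix a b assume "(a, b) \<in> H1 \<union> H2"
    then show "\<exists>e\<in>E. a e \<noteq> 0" by (rule H_nz)
  qed
  have P5: "weights E - Ucones n E Vmax \<in> null_sets (PiM E (\<lambda>_. lborel))"
  proof (rule null_subset[OF _ _ sub])
    show "(\<Union>(a, b) \<in> H1 \<union> H2. hyperplane E a b) \<in> null_sets (PiM E (\<lambda>_. lborel))"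
    proof (rule null_sets_UN')
      show "countable (H1 \<union> H2)" using H_fin by (rule countable_finite)
      fix h assume h: "h \<in> H1 \<union> H2"
      show "(case h of (a, b) \<Rightarrow> hyperplane E a b) \<in> null_sets (PiM E (\<lambda>_. lborel))"
      proof (cases h)
        case (Pair a b)
        then obtain e where "e \<in> E" "a e \<noteq> 0" using H_nz h by blast
        then show ?thesis using hyperplane_null[OF finE] Pair by simp
      qed
    qed
    have PS: "Pcone n E Vmax \<sigma> \<tau> \<in> sets (PiM E (\<lambda>_. lborel))" if x: "(\<sigma>, \<tau>) \<in> Xi n E Vmax" for \<sigma> \<tau>
    proof -
      have "open_polyhedral_cone E (Pcone n E Vmax \<sigma> \<tau>)" using P2 x by blast
      then obtain A where A: "finite A" "Pcone n E Vmax \<sigma> \<tau> = {r \<in> weights E. \<forall>a\<in>A. (\<Sum>e\<in>E. a e * r e) > 0}"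
        unfolding open_polyhedral_cone_def by blast
      show ?thesis unfolding A(2) by (rule cone_sets[OF finE A(1)])
    qed
    have "Ucones n E Vmax \<in> sets (PiM E (\<lambda>_. lborel))" unfolding Ucones_def
    proof (rule sets.finite_UN[OF Xi_fin])
      fix p assume p: "p \<in> Xi n E Vmax"
      show "(case p of (\<sigma>, \<tau>) \<Rightarrow> Pcone n E Vmax \<sigma> \<tau>) \<in> sets (PiM E (\<lambda>_. lborel))"
      proof (cases p)
        case (Pair \<sigma> \<tau>)
        then show ?thesis using PS p by simp
      qed
    qed
    then have "space (PiM E (\<lambda>_. lborel)) - Ucones n E Vmax \<in> sets (PiM E (\<lambda>_. lborel))"
      by (rule sets.compl_sets)
    moreover have "space (PiM E (\<lambda>_. lborel)) = weights E" by (simp add: space_PiM weights_def)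
    ultimately show "weights E - Ucones n E Vmax \<in> sets (PiM E (\<lambda>_. lborel))" by simp
  qed
  have P6: "\<forall>r \<in> Ucones n E Vmax.
          (\<forall>lam u lam' u'. ergodic_sol n E Vmax r lam u \<and> ergodic_sol n E Vmax r lam' u' \<longrightarrow>
              lam' = lam \<and> (\<exists>c. \<forall>i<n. u' i = u i + c)) \<and>
          (\<forall>lam u. ergodic_sol n E Vmax r lam u \<longrightarrow>
              (\<forall>i\<in>Vmax. \<exists>!j. (i, j) \<in> E \<and> r (i, j) + u j = lam + u i) \<and>
              (\<forall>i\<in>Vmin n Vmax. \<exists>!j. (i, j) \<in> E \<and> r (i, j) + u j = lam + u i))"
  proof
    fix r assume "r \<in> Ucones n E Vmax"
    then obtain \<sigma> \<tau> where x: "(\<sigma>, \<tau>) \<in> Xi n E Vmax" and rP: "r \<in> Pcone n E Vmax \<sigma> \<tau>"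
      unfolding Ucones_def by blast
    interpret X: pairXi n E Vmax \<sigma> \<tau> by (rule Xi_pairXi[OF x])
    have rS: "r \<in> X.Sset" using rP X.P_eq_S by blast
    have U: "\<exists>c. lam = X.lam0 r \<and> (\<forall>i<n. u i = X.u0 r i + c)" if "ergodic_sol n E Vmax r lam u" for lam u
      using X.S_uniq[OF rS that] by blast
    show "(\<forall>lam u lam' u'. ergodic_sol n E Vmax r lam u \<and> ergodic_sol n E Vmax r lam' u' \<longrightarrow>
              lam' = lam \<and> (\<exists>c. \<forall>i<n. u' i = u i + c)) \<and>
          (\<forall>lam u. ergodic_sol n E Vmax r lam u \<longrightarrow>
              (\<forall>i\<in>Vmax. \<exists>!j. (i, j) \<in> E \<and> r (i, j) + u j = lam + u i) \<and>
              (\<forall>i\<in>Vmin n Vmax. \<exists>!j. (i, j) \<in> E \<and> r (i, j) + u j = lam + u i))"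
    proof (intro conjI allI impI ballI; (elim conjE)?)
      fix lam u lam' u'
      assume s1: "ergodic_sol n E Vmax r lam u" and s2: "ergodic_sol n E Vmax r lam' u'"
      obtain c where c: "lam = X.lam0 r" "\<forall>i<n. u i = X.u0 r i + c" using U[OF s1] by blast
      obtain c' where c': "lam' = X.lam0 r" "\<forall>i<n. u' i = X.u0 r i + c'" using U[OF s2] by blast
      show "lam' = lam" using c c' by simp
      have "\<forall>i<n. u' i = u i + (c' - c)" using c c' by simp
      then show "\<exists>c. \<forall>i<n. u' i = u i + c" by blast
    next
      fix lam u i assume s: "ergodic_sol n E Vmax r lam u" and i: "i \<in> Vmax"
      obtain c where c: "lam = X.lam0 r" "\<forall>i<n. u i = X.u0 r i + c" using U[OF s] by blast
      have eqv: "r (i, j) + u j = lam + u i \<longleftrightarrow> j = \<sigma> i" if e: "(i, j) \<in> E" for j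
      proof -
        have "u i = X.u0 r i + c" "u j = X.u0 r j + c" using c(2) E_lt[OF e] by blast+
        then have "r (i, j) + u j = lam + u i \<longleftrightarrow> r (i, j) + X.u0 r j = X.lam0 r + X.u0 r i"
          using c(1) by linarith
        then show ?thesis using X.S_max[OF rS e i] by blast
      qed
      show "\<exists>!j. (i, j) \<in> E \<and> r (i, j) + u j = lam + u i"
        using eqv X.sig_edge[OF i] by blast
    next
      fix lam u i assume s: "ergodic_sol n E Vmax r lam u" and i: "i \<in> Vmin n Vmax"
      obtain c where c: "lam = X.lam0 r" "\<forall>i<n. u i = X.u0 r i + c" using U[OF s] by blast
      have eqv: "r (i, j) + u j = lam + u i \<longleftrightarrow> j = \<tau> i" if e: "(i, j) \<in> E" for j
      proof -
        have "u i = X.u0 r i + c" "u j = X.u0 r j + c" using c(2) E_lt[OF e] by blast+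
        then have "r (i, j) + u j = lam + u i \<longleftrightarrow> r (i, j) + X.u0 r j = X.lam0 r + X.u0 r i"
          using c(1) by linarith
        then show ?thesis using X.S_min[OF rS e i] by blast
      qed
      show "\<exists>!j. (i, j) \<in> E \<and> r (i, j) + u j = lam + u i"
        using eqv X.tau_edge[OF i] by blast
    qed
  qed
  show ?thesis by (intro conjI P1 P2 P3 P4 P5 P6)
qed

end
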